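(* For every fixed environment $\omega=(\omega_x)_{x\in\mathbb Z}\in\mathbb R^{\mathbb Z}$ and all real $-\infty<u\le v<\infty$, $$\lim_{n\to\infty} P^{\omega}_n\!\left(u\le \frac{X_n}{n}\le v\right)=\int_u^v \{1-\sin(\omega_0)\,x\}\, f_K(x)\,dx,$$ where $$f_K(x)=\frac{1}{\pi(1-x^2)\sqrt{1-2x^2}}\,I_{(-1/\sqrt2,\,1/\sqrt2)}(x),$$ and $I_A$ denotes the indicator function of $A$.
   Context: Quantum walk in an environment $\omega=(\omega_x)_{x\in\mathbb Z}$, $\omega_x\in\mathbb R$. For $x\in\mathbb Z$ let $$U_x=\frac{1}{\sqrt2}\begin{pmatrix} e^{i\omega_x} & 1\\ 1 & -e^{-i\omega_x}\end{pmatrix}=\begin{pmatrix} a_x & b_x\\ c_x & d_x\end{pmatrix},\qquad P_x=\begin{pmatrix} a_x & b_x\\ 0&0\end{pmatrix},\quad Q_x=\begin{pmatrix} 0&0\\ c_x & d_x\end{pmatrix}.$$ For integers $l,m$ define $2\times2$ matrices $\Xi_n(l,m)$, $n=l+m$, by $\Xi_0(0,0)=I$, $\Xi_n(l,m)=0$ if $l<0$ or $m<0$, and for $l,m\ge0$ with $l+m=n+1\ge1$, writing $x=-l+m$, $$\Xi_{n+1}(l,m)=P_{x+1}\,\Xi_n(l-1,m)+Q_{x-1}\,\Xi_n(l,m-1).$$ (Equivalently, $\Xi_n(l,m)$ is the sum over all nearest-neighbour paths from $0$ with $l$ left steps and $m$ right steps of the ordered product, latest step leftmost, of $P_y$ for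 each left step from site $y$ and $Q_y$ for each right step from site $y$.) Let $\varphi_*={}^T[1/\sqrt2,\,i/\sqrt2]$. The quenched law of the position $X_n$ at time $n$ is $P^{\omega}_n(X_n=x)=\|\Xi_n(l,m)\varphi_*\|^2$ for $x=-l+m$, $n=l+m$, $l,m\ge0$ (and $0$ for other $x$); this is a probability distribution on $\mathbb Z$. *)

theory Defs
  imports "HOL-Analysis.Analysis"
begin

text \<open>2x2 complex matrices are rendered as complex^2^2 (rows/columns indexed by 1, 2).\<close>

definition mat2 :: "complex \<Rightarrow> complex \<Rightarrow> complex \<Rightarrow> complex \<Rightarrow> complex^2^2" where
  "mat2 a b c d = (\<chi> i j. if i = 1 then (if j = 1 then a else b) else (if j = 1 then c else d))"

definition qw_a :: "(int \<Rightarrow> real) \<Rightarrow> int \<Rightarrow> complex" where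
  "qw_a \<omega> x = cis (\<omega> x) / complex_of_real (sqrt 2)"
definition qw_b :: "(int \<Rightarrow> real) \<Rightarrow> int \<Rightarrow> complex" where
  "qw_b \<omega> x = 1 / complex_of_real (sqrt 2)"
definition qw_c :: "(int \<Rightarrow> real) \<Rightarrow> int \<Rightarrow> complex" where
  "qw_c \<omega> x = 1 / complex_of_real (sqrt 2)"
definition qw_d :: "(int \<Rightarrow> real) \<Rightarrow> int \<Rightarrow> complex" where
  "qw_d \<omega> x = - cis (- \<omega> x) / complex_of_real (sqrt 2)"

definition qw_U :: "(int \<Rightarrow> real) \<Rightarrow> int \<Rightarrow> complex^2^2" where
  "qw_U \<omega> x = mat2 (qw_a \<omega> x) (qw_b \<omega> x) (qw_c \<omega> x) (qw_d \<omega> x)"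
definition qw_P :: "(int \<Rightarrow> real) \<Rightarrow> int \<Rightarrow> complex^2^2" where
  "qw_P \<omega> x = mat2 (qw_a \<omega> x) (qw_b \<omega> x) 0 0"
definition qw_Q :: "(int \<Rightarrow> real) \<Rightarrow> int \<Rightarrow> complex^2^2" where
  "qw_Q \<omega> x = mat2 0 0 (qw_c \<omega> x) (qw_d \<omega> x)"

text \<open>Xi \<omega> l m = \<Xi>_{l+m}(l,m); position x = -l+m.  Terms with a negative index vanish.\<close>
fun Xi :: "(int \<Rightarrow> real) \<Rightarrow> nat \<Rightarrow> nat \<Rightarrow> complex^2^2" where
  "Xi \<omega> 0 0 = mat 1"
| "Xi \<omega> (Suc l) 0 = qw_P \<omega> (- int (Suc l) + 1) ** Xi \<omega> l 0"
| "Xi \<omega> 0 (Suc m) = qw_Q \<omega> (int (Suc m) - 1) ** Xi \<omega> 0 m"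
| "Xi \<omega> (Suc l) (Suc m) =
     qw_P \<omega> (- int (Suc l) + int (Suc m) + 1) ** Xi \<omega> l (Suc m)
   + qw_Q \<omega> (- int (Suc l) + int (Suc m) - 1) ** Xi \<omega> (Suc l) m"

definition phi_star :: "complex^2" where
  "phi_star = (\<chi> i. if i = 1 then 1 / complex_of_real (sqrt 2) else \<i> / complex_of_real (sqrt 2))"

definition qw_prob :: "(int \<Rightarrow> real) \<Rightarrow> nat \<Rightarrow> int \<Rightarrow> real" where
  "qw_prob \<omega> n x =
     (if \<bar>x\<bar> \<le> int n \<and> even (int n + x)
      then (norm (Xi \<omega> (nat ((int n - x) div 2)) (nat ((int n + x) div 2)) *v phi_star))\<^sup>2
      else 0)"

definition qw_interval_prob :: "(int \<Rightarrow> real) \<Rightarrow> nat \<Rightarrow> real \<Rightarrow> real \<Rightarrow> real" where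
  "qw_interval_prob \<omega> n u v =
     (\<Sum>x\<in>{x\<in>{- int n..int n}. u \<le> real_of_int x / real n \<and> real_of_int x / real n \<le> v}. qw_prob \<omega> n x)"

definition f_K :: "real \<Rightarrow> real" where
  "f_K x = indicator {-1/sqrt 2<..<1/sqrt 2} x / (pi * (1 - x\<^sup>2) * sqrt (1 - 2 * x\<^sup>2))"

end

theory Submission
  imports Defs "HOL-Probability.Probability"
begin

definition Psi :: "(int\<Rightarrow>real) \<Rightarrow> nat \<Rightarrow> int \<Rightarrow> complex^2" where
 "Psi \<omega> n x = (if \<bar>x\<bar> \<le> int n \<and> even (int n + x)
     then Xi \<omega> (nat ((int n - x) div 2)) (nat ((int n + x) div 2)) *v phi_star else 0)"

lemma Psi_eq: "n = l + m \<Longrightarrow> Psi \<omega> n (int m - int l) = Xi \<omega> l m *v phi_star"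
proof -
  assume n: "n = l + m"
  have e: "even (int n + (int m - int l))" using n by (simp add: algebra_simps)
  have 1: "nat ((int n - (int m - int l)) div 2) = l" using n by simp
  have 2: "nat ((int n + (int m - int l)) div 2) = m" using n by simp
  show ?thesis unfolding Psi_def using n e 1 2 by auto
qed

lemma Psi_zero: "\<bar>x\<bar> > int n \<or> odd (int n + x) \<Longrightarrow> Psi \<omega> n x = 0"
  unfolding Psi_def by auto

lemma Psi_rec: "Psi \<omega> (Suc n) x = qw_P \<omega> (x+1) *v Psi \<omega> n (x+1) + qw_Q \<omega> (x-1) *v Psi \<omega> n (x-1)"
proof (cases "\<bar>x\<bar> \<le> int n + 1 \<and> even (int n + 1 + x)")
  case True
  define l where "l = nat ((int n + 1 - x) div 2)"
  define m where "m = nat ((int n + 1 + x) div 2)"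
  obtain q where q: "int n + 1 + x = 2 * q" using True by (meson evenE)
  have q1: "(int n + 1 + x) div 2 = q" using q by simp
  have q2': "int n + 1 - x = 2 * (int n + 1 - q)" using q by (simp add: right_diff_distrib distrib_left)
  have q2: "(int n + 1 - x) div 2 = int n + 1 - q" unfolding q2' by simp
  have lm: "Suc n = l + m" "x = int m - int l" using True q unfolding l_def m_def q1 q2 by linarith+
  show ?thesis
  proof (cases l)
    case 0
    then have m: "m = Suc n" using lm by simp
    have x: "x = int n + 1" using lm 0 m by simp
    have "Psi \<omega> (Suc n) x = Xi \<omega> 0 (Suc n) *v phi_star" using Psi_eq[of "Suc n" 0 "Suc n" \<omega>] x by (simp add: add.commute)
    moreover have "Psi \<omega> n (x-1) = Xi \<omega> 0 n *v phi_star" using Psi_eq[of n 0 n \<omega>] x by simp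
    moreover have "Psi \<omega> n (x+1) = 0" using x by (intro Psi_zero) simp
    ultimately show ?thesis using x by (simp add: matrix_vector_mul_assoc)
  next
    case (Suc l')
    show ?thesis
    proof (cases m)
      case 0
      then have l: "l = Suc n" using lm by simp
      have x: "x = - 1 - int n" using lm 0 l by simp
      have "Psi \<omega> (Suc n) x = Xi \<omega> (Suc n) 0 *v phi_star" using Psi_eq[of "Suc n" "Suc n" 0 \<omega>] x by (simp add: add.commute)
      moreover have "Psi \<omega> n (x+1) = Xi \<omega> n 0 *v phi_star" using Psi_eq[of n n 0 \<omega>] x by simp
      moreover have "Psi \<omega> n (x-1) = 0" using x by (intro Psi_zero) simp
      ultimately show ?thesis using x by (simp add: matrix_vector_mul_assoc)
    next
      case (Suc m')
      have n: "n = l' + Suc m'" "Suc n = Suc l' + Suc m'" using lm \<open>l = Suc l'\<close> Suc by simp_all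
      have x: "x = int (Suc m') - int (Suc l')" using lm \<open>l = Suc l'\<close> Suc by simp
      have x1: "x + 1 = int (Suc m') - int l'" "x - 1 = int m' - int (Suc l')" using x by simp_all
      have "Psi \<omega> (Suc n) x = Xi \<omega> (Suc l') (Suc m') *v phi_star"
        unfolding x by (rule Psi_eq[OF n(2)])
      moreover have "Psi \<omega> n (x+1) = Xi \<omega> l' (Suc m') *v phi_star"
        unfolding x1 by (rule Psi_eq[OF n(1)])
      moreover have "Psi \<omega> n (x-1) = Xi \<omega> (Suc l') m' *v phi_star"
        unfolding x1 by (rule Psi_eq) (use n in simp)
      moreover have "- int (Suc l') + int (Suc m') + 1 = x + 1" "- int (Suc l') + int (Suc m') - 1 = x - 1"
        using x by simp_all
      ultimately show ?thesis
        by (simp only: Xi.simps matrix_vector_mul_assoc matrix_vector_mult_add_rdistrib)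
    qed
  qed
next
  case False
  then have "Psi \<omega> (Suc n) x = 0" by (intro Psi_zero) auto
  moreover have "Psi \<omega> n (x+1) = 0" "Psi \<omega> n (x-1) = 0" using False by (auto intro!: Psi_zero)
  ultimately show ?thesis by simp
qed

lemma mat2_mult_1: "(mat2 a b c d *v v) $ 1 = a * v $ 1 + b * v $ 2"
  by (simp add: mat2_def matrix_vector_mult_def sum_2)
lemma mat2_mult_2: "(mat2 a b c d *v v) $ 2 = c * v $ 1 + d * v $ 2"
  by (simp add: mat2_def matrix_vector_mult_def sum_2)

lemma norm_vec2_sq: "(norm (v::complex^2))\<^sup>2 = (cmod (v$1))\<^sup>2 + (cmod (v$2))\<^sup>2"
  by (simp add: norm_vec_def L2_set_def sum_2 add_nonneg_nonneg)

lemma Psi_rec1: "Psi \<omega> (Suc n) x $ 1 = qw_a \<omega> (x+1) * Psi \<omega> n (x+1) $ 1 + qw_b \<omega> (x+1) * Psi \<omega> n (x+1) $ 2"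
  by (simp add: Psi_rec qw_P_def qw_Q_def mat2_mult_1)
lemma Psi_rec2: "Psi \<omega> (Suc n) x $ 2 = qw_c \<omega> (x-1) * Psi \<omega> n (x-1) $ 1 + qw_d \<omega> (x-1) * Psi \<omega> n (x-1) $ 2"
  by (simp add: Psi_rec qw_P_def qw_Q_def mat2_mult_2)

lemma Psi_0: "Psi \<omega> 0 x = (if x = 0 then phi_star else 0)"
  unfolding Psi_def by auto

definition thg :: "(int \<Rightarrow> real) \<Rightarrow> int \<Rightarrow> real" where
  "thg \<omega> x = (\<omega> x + \<omega> (x+1)) / 2"
definition Sg :: "(int \<Rightarrow> real) \<Rightarrow> int \<Rightarrow> real" where
  "Sg \<omega> x = (if 0 \<le> x then (\<Sum>k\<in>{0..<x}. thg \<omega> k) else - (\<Sum>k\<in>{x..<0}. thg \<omega> k))"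

lemma Sg_step: "Sg \<omega> (x+1) = Sg \<omega> x + thg \<omega> x"
proof (cases "0 \<le> x")
  case True
  then have "{0..<x+1} = insert x {0..<x}" by auto
  then show ?thesis using True unfolding Sg_def by simp
next
  case False
  show ?thesis
  proof (cases "x = -1")
    case True
    have "{-1..<0::int} = {-1}" by auto
    then show ?thesis using True unfolding Sg_def by simp
  next
    case False2: False
    then have "{x..<0} = insert x {x+1..<0}" using False by auto
    then show ?thesis using False False2 unfolding Sg_def by simp
  qed
qed

lemma Sg_0[simp]: "Sg \<omega> 0 = 0" by (simp add: Sg_def)

fun hw :: "complex \<Rightarrow> complex \<Rightarrow> nat \<Rightarrow> int \<Rightarrow> complex \<times> complex" where
  "hw al be 0 x = (if x = 0 then (al, be) else (0, 0))"
| "hw al be (Suc n) x =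
    ((fst (hw al be n (x+1)) + snd (hw al be n (x+1))) / complex_of_real (sqrt 2),
     (fst (hw al be n (x-1)) - snd (hw al be n (x-1))) / complex_of_real (sqrt 2))"

definition alpha0 :: "(int \<Rightarrow> real) \<Rightarrow> complex" where
  "alpha0 \<omega> = cis (\<omega> 0 / 2) / complex_of_real (sqrt 2)"
definition beta0 :: "(int \<Rightarrow> real) \<Rightarrow> complex" where
  "beta0 \<omega> = \<i> * cis (- \<omega> 0 / 2) / complex_of_real (sqrt 2)"

lemma gauge:
  "hw (alpha0 \<omega>) (beta0 \<omega>) n x =
     (cis (Sg \<omega> x + \<omega> x / 2) * Psi \<omega> n x $ 1, cis (Sg \<omega> x - \<omega> x / 2) * Psi \<omega> n x $ 2)"
proof (induction n arbitrary: x)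
  case 0
  then show ?case by (simp add: Psi_0 alpha0_def beta0_def phi_star_def)
next
  case (Suc n)
  have s1: "Sg \<omega> (x+1) = Sg \<omega> x + (\<omega> x + \<omega> (x+1)) / 2" using Sg_step[of \<omega> x] by (simp add: thg_def)
  have s2: "Sg \<omega> x = Sg \<omega> (x-1) + (\<omega> (x-1) + \<omega> x) / 2" using Sg_step[of \<omega> "x-1"] by (simp add: thg_def)
  have c1: "cis (Sg \<omega> (x+1) + \<omega> (x+1) / 2) = cis (Sg \<omega> x + \<omega> x / 2) * cis (\<omega> (x+1))"
    unfolding s1 cis_mult by (rule arg_cong[where f=cis]) (simp add: field_simps)
  have c2: "cis (Sg \<omega> (x+1) - \<omega> (x+1) / 2) = cis (Sg \<omega> x + \<omega> x / 2)"
    unfolding s1 by (rule arg_cong[where f=cis]) (simp add: field_simps)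
  have c3: "cis (Sg \<omega> (x-1) + \<omega> (x-1) / 2) = cis (Sg \<omega> x - \<omega> x / 2)"
    unfolding s2 by (rule arg_cong[where f=cis]) (simp add: field_simps)
  have c4: "cis (Sg \<omega> (x-1) - \<omega> (x-1) / 2) = cis (Sg \<omega> x - \<omega> x / 2) * cis (- \<omega> (x-1))"
    unfolding s2 cis_mult by (rule arg_cong[where f=cis]) (simp add: field_simps)
  show ?case
    unfolding hw.simps Suc.IH Psi_rec1 Psi_rec2 fst_conv snd_conv c1 c2 c3 c4
    by (simp add: qw_a_def qw_b_def qw_c_def qw_d_def algebra_simps add_divide_distrib diff_divide_distrib)
qed

lemma qw_prob_hw: "qw_prob \<omega> n x = (cmod (fst (hw (alpha0 \<omega>) (beta0 \<omega>) n x)))\<^sup>2 + (cmod (snd (hw (alpha0 \<omega>) (beta0 \<omega>) n x)))\<^sup>2"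
proof -
  have "qw_prob \<omega> n x = (norm (Psi \<omega> n x))\<^sup>2" unfolding qw_prob_def Psi_def by auto
  then show ?thesis unfolding gauge by (simp add: norm_mult norm_vec2_sq)
qed

lemma hw_supp: "int n < \<bar>x\<bar> \<Longrightarrow> hw al be n x = (0, 0)"
proof (induction n arbitrary: x)
  case 0 then show ?case by simp
next
  case (Suc n)
  have "int n < \<bar>x+1\<bar>" "int n < \<bar>x-1\<bar>" using Suc.prems by auto
  then show ?case using Suc.IH by simp
qed

definition fourier :: "(int \<Rightarrow> complex) \<Rightarrow> int \<Rightarrow> real \<Rightarrow> complex" where
  "fourier f N k = (\<Sum>x\<in>{-N..N}. f x * iexp (k * of_int x))"

lemma iexp_add: "iexp (a + b) = iexp a * iexp b"
  by (simp add: distrib_left exp_add)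

lemma iexp_shift1: "iexp (k * of_int (y - 1)) = iexp (-k) * iexp (k * of_int y)"
  unfolding iexp_add[symmetric] by (rule arg_cong[where f=iexp]) (simp add: algebra_simps)
lemma iexp_shift2: "iexp (k * of_int (y + 1)) = iexp k * iexp (k * of_int y)"
  unfolding iexp_add[symmetric] by (rule arg_cong[where f=iexp]) (simp add: algebra_simps)

lemma fourier_shift_plus:
  assumes N: "0 \<le> N" and z: "\<And>y. N < \<bar>y\<bar> \<Longrightarrow> g y = 0"
  shows "(\<Sum>x\<in>{-(N+1)..N+1}. g (x+1) * iexp (k * of_int x)) = iexp (-k) * fourier g N k"
proof -
  have "(\<Sum>x\<in>{-(N+1)..N+1}. g (x+1) * iexp (k * of_int x)) = (\<Sum>y\<in>{-N..N+2}. g y * iexp (k * of_int (y - 1)))"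
    by (rule sum.reindex_bij_witness[of _ "\<lambda>y. y - 1" "\<lambda>x. x + 1"]) auto
  also have "\<dots> = (\<Sum>y\<in>{-N..N}. g y * iexp (k * of_int (y - 1)))"
    by (rule sum.mono_neutral_right) (use z N in auto)
  also have "\<dots> = iexp (-k) * fourier g N k"
    unfolding fourier_def sum_distrib_left
    by (rule sum.cong) (simp_all only: iexp_shift1 mult_ac)
  finally show ?thesis .
qed

lemma fourier_shift_minus:
  assumes N: "0 \<le> N" and z: "\<And>y. N < \<bar>y\<bar> \<Longrightarrow> g y = 0"
  shows "(\<Sum>x\<in>{-(N+1)..N+1}. g (x-1) * iexp (k * of_int x)) = iexp k * fourier g N k"
proof -
  have "(\<Sum>x\<in>{-(N+1)..N+1}. g (x-1) * iexp (k * of_int x)) = (\<Sum>y\<in>{-N-2..N}. g y * iexp (k * of_int (y + 1)))"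
    by (rule sum.reindex_bij_witness[of _ "\<lambda>y. y + 1" "\<lambda>x. x - 1"]) auto
  also have "\<dots> = (\<Sum>y\<in>{-N..N}. g y * iexp (k * of_int (y + 1)))"
    by (rule sum.mono_neutral_right) (use z N in auto)
  also have "\<dots> = iexp k * fourier g N k"
    unfolding fourier_def sum_distrib_left
    by (rule sum.cong) (simp_all only: iexp_shift2 mult_ac)
  finally show ?thesis .
qed

definition FA :: "complex \<Rightarrow> complex \<Rightarrow> nat \<Rightarrow> real \<Rightarrow> complex" where
  "FA al be n = fourier (\<lambda>x. fst (hw al be n x)) (int n)"
definition FB :: "complex \<Rightarrow> complex \<Rightarrow> nat \<Rightarrow> real \<Rightarrow> complex" where
  "FB al be n = fourier (\<lambda>x. snd (hw al be n x)) (int n)"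

lemma FA_0: "FA al be 0 k = al" and FB_0: "FB al be 0 k = be"
  by (simp_all add: FA_def FB_def fourier_def)

lemma FA_Suc: "FA al be (Suc n) k = iexp (-k) * (FA al be n k + FB al be n k) / complex_of_real (sqrt 2)"
proof -
  have "FA al be (Suc n) k = (\<Sum>x\<in>{-(int n+1)..int n+1}. (\<lambda>y. (fst (hw al be n y) + snd (hw al be n y)) / complex_of_real (sqrt 2)) (x+1) * iexp (k * of_int x))"
    unfolding FA_def fourier_def hw.simps fst_conv of_nat_Suc by (simp only: add.commute)
  also have "\<dots> = iexp (-k) * fourier (\<lambda>y. (fst (hw al be n y) + snd (hw al be n y)) / complex_of_real (sqrt 2)) (int n) k"
    by (rule fourier_shift_plus) (auto simp: hw_supp)
  also have "\<dots> = iexp (-k) * (FA al be n k + FB al be n k) / complex_of_real (sqrt 2)"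
    by (simp add: FA_def FB_def fourier_def sum_divide_distrib[symmetric] sum.distrib distrib_right)
  finally show ?thesis .
qed

lemma FB_Suc: "FB al be (Suc n) k = iexp k * (FA al be n k - FB al be n k) / complex_of_real (sqrt 2)"
proof -
  have "FB al be (Suc n) k = (\<Sum>x\<in>{-(int n+1)..int n+1}. (\<lambda>y. (fst (hw al be n y) - snd (hw al be n y)) / complex_of_real (sqrt 2)) (x-1) * iexp (k * of_int x))"
    unfolding FB_def fourier_def hw.simps snd_conv of_nat_Suc by (simp only: add.commute)
  also have "\<dots> = iexp k * fourier (\<lambda>y. (fst (hw al be n y) - snd (hw al be n y)) / complex_of_real (sqrt 2)) (int n) k"
    by (rule fourier_shift_minus) (auto simp: hw_supp)
  also have "\<dots> = iexp k * (FA al be n k - FB al be n k) / complex_of_real (sqrt 2)"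
    by (simp add: FA_def FB_def fourier_def sum_divide_distrib[symmetric] sum_subtractf left_diff_distrib)
  finally show ?thesis .
qed

lemma iexp_cis: "iexp x = cis x" by (simp add: cis_conv_exp)

lemma iexp_deriv: "((\<lambda>k. iexp (k * m)) has_vector_derivative (m *\<^sub>R (\<i> * iexp (k*m)))) (at k within S)"
proof -
  have "((\<lambda>k::real. k * m) has_vector_derivative m) (at k within S)"
    using has_real_derivative_iff_has_vector_derivative DERIV_cmult_right[of "\<lambda>x. x" 1 k S m, simplified] by auto
  from vector_diff_chain_within[OF this has_vector_derivative_iexp]
  show ?thesis by (simp add: o_def)
qed

lemma has_integral_iexp_int:
  "((\<lambda>k. iexp (k * of_int m)) has_integral (if m = 0 then 2*pi else 0)) {0..2*pi}"
proof (cases "m = 0")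
  case True
  then show ?thesis using has_integral_const_real[of "1::complex" 0 "2*pi"] by (simp add: scaleR_conv_of_real)
next
  case False
  let ?f = "\<lambda>k. iexp (k * of_int m) / (\<i> * of_int m)"
  have d: "(?f has_vector_derivative iexp (k * of_int m)) (at k within {0..2*pi})" for k
    using has_vector_derivative_divide[OF iexp_deriv[of "of_int m" k "{0..2*pi}"], of "\<i> * of_int m"] False
    by (simp add: scaleR_conv_of_real)
  have "((\<lambda>k. iexp (k * of_int m)) has_integral (?f (2*pi) - ?f 0)) {0..2*pi}"
    by (rule fundamental_theorem_of_calculus) (use d in auto)
  moreover have "iexp (2 * pi * of_int m) = 1"
    unfolding iexp_cis by (rule cis_multiple_2pi) simp
  ultimately show ?thesis using False by (simp add: mult_ac)
qed

lemma integral_iexp_int: "integral {0..2*pi} (\<lambda>k. iexp (k * of_int m)) = (if m = 0 then 2*pi else 0)"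
  using has_integral_iexp_int by (rule integral_unique)

lemma parseval:
  "((\<lambda>k. cnj (fourier f N k) * fourier g N (k + s)) has_integral
      (2 * pi * (\<Sum>x\<in>{-N..N}. cnj (f x) * g x * iexp (s * of_int x)))) {0..2*pi}"
proof -
  have e: "cnj (fourier f N k) * fourier g N (k + s) =
     (\<Sum>x\<in>{-N..N}. \<Sum>y\<in>{-N..N}. (cnj (f x) * g y * iexp (s * of_int y)) * iexp (k * of_int (y - x)))" for k
  proof -
    have c: "cnj (fourier f N k) = (\<Sum>x\<in>{-N..N}. cnj (f x) * iexp (- (k * of_int x)))"
      unfolding fourier_def by (simp add: exp_cnj)
    have h: "iexp (- (k * of_int x)) * iexp ((k + s) * of_int y) = iexp (s * of_int y) * iexp (k * of_int (y - x))" for x y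
      unfolding iexp_add[symmetric] by (rule arg_cong[where f=iexp]) (simp add: algebra_simps)
    have t: "(cnj (f x) * iexp (- (k * of_int x))) * (g y * iexp ((k + s) * of_int y)) =
        (cnj (f x) * g y * iexp (s * of_int y)) * iexp (k * of_int (y - x))" for x y
    proof -
      have "(cnj (f x) * iexp (- (k * of_int x))) * (g y * iexp ((k + s) * of_int y)) =
        (cnj (f x) * g y) * (iexp (- (k * of_int x)) * iexp ((k + s) * of_int y))" by (simp only: mult_ac)
      also have "\<dots> = (cnj (f x) * g y) * (iexp (s * of_int y) * iexp (k * of_int (y - x)))" by (simp only: h)
      finally show ?thesis by (simp only: mult_ac)
    qed
    show ?thesis unfolding c unfolding fourier_def sum_product t ..
  qed
  have "((\<lambda>k. \<Sum>x\<in>{-N..N}. \<Sum>y\<in>{-N..N}. (cnj (f x) * g y * iexp (s * of_int y)) * iexp (k * of_int (y - x))) has_integral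
      (\<Sum>x\<in>{-N..N}. \<Sum>y\<in>{-N..N}. (cnj (f x) * g y * iexp (s * of_int y)) * (if y - x = 0 then 2*pi else 0))) {0..2*pi}"
    by (intro has_integral_sum finite_atLeastAtMost_int has_integral_mult_right has_integral_iexp_int)
  moreover have "(\<Sum>x\<in>{-N..N}. \<Sum>y\<in>{-N..N}. (cnj (f x) * g y * iexp (s * of_int y)) * (if y - x = 0 then 2*pi else 0))
      = 2 * pi * (\<Sum>x\<in>{-N..N}. cnj (f x) * g x * iexp (s * of_int x))"
    by (simp add: sum_distrib_left if_distrib mult_ac cong: if_cong)
  ultimately show ?thesis unfolding e by simp
qed

lemma eig_alg:
  fixes E F q lp lm al be D :: complex
  assumes h: "E*F = 1" "q*q = 2" "q*(lp + lm) = E - F" "lp*lm = -1" "D = lp - lm" "D \<noteq> 0" "q\<noteq>0"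
  shows "E*((E*(al+be)/q - lm*al)/D + (F*(al-be)/q - lm*be)/D)/q = lp*((E*(al+be)/q - lm*al)/D)"
    "F*((E*(al+be)/q - lm*al)/D - (F*(al-be)/q - lm*be)/D)/q = lp*((F*(al-be)/q - lm*be)/D)"
    "E*((lp*al - E*(al+be)/q)/D + (lp*be - F*(al-be)/q)/D)/q = lm*((lp*al - E*(al+be)/q)/D)"
    "F*((lp*al - E*(al+be)/q)/D - (lp*be - F*(al-be)/q)/D)/q = lm*((lp*be - F*(al-be)/q)/D)"
  using h by (simp_all add: field_simps; algebra)+

definition th :: "real \<Rightarrow> real" where "th k = - arcsin (sin k / sqrt 2)"
definition Hv :: "real \<Rightarrow> real" where "Hv k = - cos k / sqrt (1 + (cos k)\<^sup>2)"
definition lp :: "real \<Rightarrow> complex" where "lp k = iexp (th k)"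
definition lm :: "real \<Rightarrow> complex" where "lm k = - iexp (- th k)"
definition Dd :: "real \<Rightarrow> complex" where "Dd k = lp k - lm k"
definition M1 :: "complex \<Rightarrow> complex \<Rightarrow> real \<Rightarrow> complex" where
  "M1 al be k = iexp (-k) * (al + be) / complex_of_real (sqrt 2)"
definition M2 :: "complex \<Rightarrow> complex \<Rightarrow> real \<Rightarrow> complex" where
  "M2 al be k = iexp k * (al - be) / complex_of_real (sqrt 2)"
definition P1 where "P1 al be k = (M1 al be k - lm k * al) / Dd k"
definition P2 where "P2 al be k = (M2 al be k - lm k * be) / Dd k"
definition Q1 where "Q1 al be k = (lp k * al - M1 al be k) / Dd k"
definition Q2 where "Q2 al be k = (lp k * be - M2 al be k) / Dd k"

lemma sin_k_bound: "\<bar>sin k / sqrt 2\<bar> < 1"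
proof -
  have "\<bar>sin k\<bar> \<le> 1" by simp
  moreover have "1 < sqrt (2::real)" by simp
  ultimately have "\<bar>sin k\<bar> < sqrt 2" by linarith
  then show ?thesis by (simp add: abs_div divide_less_eq)
qed
lemma sin_k_bound': "-1 \<le> sin k / sqrt 2" "sin k / sqrt 2 \<le> 1"
  using sin_k_bound[of k] by (simp_all only: abs_less_iff) linarith+
lemma sin_th: "sin (th k) = - sin k / sqrt 2"
  using sin_k_bound'[of k] by (simp add: th_def sin_arcsin)
lemma cos_th: "cos (th k) = sqrt (1 - (sin k / sqrt 2)\<^sup>2)"
  using sin_k_bound'[of k] by (simp add: th_def cos_arcsin)
lemma cos_th_pos: "cos (th k) > 0"
proof -
  have "(sin k / sqrt 2)\<^sup>2 < 1" using sin_k_bound[of k] by (simp only: abs_square_less_1)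
  then show ?thesis unfolding cos_th by simp
qed
lemma Re_iexp[simp]: "Re (iexp x) = cos x" and Im_iexp[simp]: "Im (iexp x) = sin x"
  by (simp_all add: Re_exp Im_exp)
lemma Re_iexpm[simp]: "Re (exp (- (\<i> * complex_of_real x))) = cos x"
  and Im_iexpm[simp]: "Im (exp (- (\<i> * complex_of_real x))) = - sin x"
  by (simp_all add: Re_exp Im_exp)

lemma Dd_eq: "Dd k = complex_of_real (2 * cos (th k))"
  by (simp add: Dd_def lp_def lm_def complex_eq_iff)

lemma Dd_nz: "Dd k \<noteq> 0"
  using cos_th_pos[of k] by (simp add: Dd_eq)

lemma lp_lm_sum: "complex_of_real (sqrt 2) * (lp k + lm k) = iexp (-k) - iexp k"
  by (simp add: lp_def lm_def complex_eq_iff sin_th)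

lemma lp_lm_prod: "lp k * lm k = -1"
  unfolding lp_def lm_def mult_minus_right iexp_add[symmetric] by simp

lemma EF: "iexp (-k) * iexp k = 1"
  unfolding iexp_add[symmetric] by simp

lemma sq2sq: "complex_of_real (sqrt 2) * complex_of_real (sqrt 2) = 2"
  by (simp flip: of_real_mult)

lemmas eig_facts = eig_alg[OF EF sq2sq lp_lm_sum lp_lm_prod Dd_def Dd_nz]

lemma eigP:
  "iexp (-k) * (P1 al be k + P2 al be k) / complex_of_real (sqrt 2) = lp k * P1 al be k"
  "iexp k * (P1 al be k - P2 al be k) / complex_of_real (sqrt 2) = lp k * P2 al be k"
  "iexp (-k) * (Q1 al be k + Q2 al be k) / complex_of_real (sqrt 2) = lm k * Q1 al be k"
  "iexp k * (Q1 al be k - Q2 al be k) / complex_of_real (sqrt 2) = lm k * Q2 al be k"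
  using eig_facts[of k al be] unfolding P1_def P2_def Q1_def Q2_def M1_def M2_def by simp_all

lemma spectral:
  "FA al be n k = lp k ^ n * P1 al be k + lm k ^ n * Q1 al be k \<and>
   FB al be n k = lp k ^ n * P2 al be k + lm k ^ n * Q2 al be k"
proof (induction n)
  case 0
  have "M1 al be k - lm k * al + (lp k * al - M1 al be k) = al * Dd k"
    "M2 al be k - lm k * be + (lp k * be - M2 al be k) = be * Dd k" by (simp_all add: Dd_def algebra_simps)
  then have "P1 al be k + Q1 al be k = al" "P2 al be k + Q2 al be k = be"
    using Dd_nz[of k] unfolding P1_def Q1_def P2_def Q2_def add_divide_distrib[symmetric] by simp_all
  then show ?case by (simp add: FA_0 FB_0)
next
  case (Suc n)
  have a: "iexp (-k) * ((lp k ^ n * P1 al be k + lm k ^ n * Q1 al be k) + (lp k ^ n * P2 al be k + lm k ^ n * Q2 al be k)) / complex_of_real (sqrt 2)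
     = lp k ^ n * (iexp (-k) * (P1 al be k + P2 al be k) / complex_of_real (sqrt 2)) + lm k ^ n * (iexp (-k) * (Q1 al be k + Q2 al be k) / complex_of_real (sqrt 2))"
    by (simp add: algebra_simps add_divide_distrib)
  have b: "iexp k * ((lp k ^ n * P1 al be k + lm k ^ n * Q1 al be k) - (lp k ^ n * P2 al be k + lm k ^ n * Q2 al be k)) / complex_of_real (sqrt 2)
     = lp k ^ n * (iexp k * (P1 al be k - P2 al be k) / complex_of_real (sqrt 2)) + lm k ^ n * (iexp k * (Q1 al be k - Q2 al be k) / complex_of_real (sqrt 2))"
    by (simp add: algebra_simps add_divide_distrib diff_divide_distrib)
  show ?case
    unfolding FA_Suc FB_Suc Suc.IH[THEN conjunct1] Suc.IH[THEN conjunct2] a b eigP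
    by simp
qed

definition ip :: "complex \<Rightarrow> complex \<Rightarrow> complex \<Rightarrow> complex \<Rightarrow> complex" where
  "ip x1 x2 y1 y2 = cnj x1 * y1 + cnj x2 * y2"

lemma unit_alg:
  fixes E F q x1 x2 y1 y2 :: complex
  assumes "cnj E * E = 1" "cnj F * F = 1" "cnj q = q" "q * q = 2"
  shows "cnj (E*(x1+x2)/q) * (E*(y1+y2)/q) + cnj (F*(x1-x2)/q) * (F*(y1-y2)/q) = cnj x1 * y1 + cnj x2 * y2"
proof -
  have q: "q \<noteq> 0" using assms(4) by auto
  have "cnj (E*(x1+x2)/q) * (E*(y1+y2)/q) + cnj (F*(x1-x2)/q) * (F*(y1-y2)/q)
     = ((cnj E * E) * (cnj x1 + cnj x2) * (y1 + y2) + (cnj F * F) * (cnj x1 - cnj x2) * (y1 - y2)) / (q * q)"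
    using assms(3) q by (simp add: field_simps)
  also have "\<dots> = cnj x1 * y1 + cnj x2 * y2" using assms by (simp add: field_simps; algebra)
  finally show ?thesis .
qed

lemma cnj_iexp: "cnj (iexp x) = iexp (-x)"
  by (simp add: exp_cnj)

lemma cnj_iexp_mult: "cnj (iexp x) * iexp x = 1"
  unfolding cnj_iexp iexp_add[symmetric] by simp

lemma unitary:
  "ip (iexp (-k) * (x1 + x2) / complex_of_real (sqrt 2)) (iexp k * (x1 - x2) / complex_of_real (sqrt 2))
      (iexp (-k) * (y1 + y2) / complex_of_real (sqrt 2)) (iexp k * (y1 - y2) / complex_of_real (sqrt 2))
   = ip x1 x2 y1 y2"
  unfolding ip_def by (rule unit_alg) (rule cnj_iexp_mult, rule cnj_iexp_mult, simp, rule sq2sq)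

lemma cnj_lp_lm: "cnj (lp k) * lm k \<noteq> 1"
proof
  assume h: "cnj (lp k) * lm k = 1"
  have "cnj (lp k) * lm k = - iexp (- (2 * th k))"
    unfolding lp_def lm_def cnj_iexp mult_minus_right iexp_add[symmetric] by simp
  moreover have "Re (- iexp (- (2 * th k))) = - cos (2 * th k)" by (simp only: uminus_complex.sel Re_iexp cos_minus)
  ultimately have "Re (cnj (lp k) * lm k) = - cos (2 * th k)" by simp
  also have "\<dots> = - (1 - 2 * (sin (th k))\<^sup>2)" by (simp add: cos_double_sin)
  also have "\<dots> \<le> 0"
  proof -
    have "(sin k)\<^sup>2 \<le> 1" by (simp add: abs_square_le_1)
    then have "(sin (th k))\<^sup>2 \<le> 1/2" unfolding sin_th by (simp add: power_divide)
    then show ?thesis by simp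
  qed
  finally show False using h by simp
qed

lemma ortho: "ip (P1 al be k) (P2 al be k) (Q1 al be k) (Q2 al be k) = 0"
proof -
  let ?x = "ip (P1 al be k) (P2 al be k) (Q1 al be k) (Q2 al be k)"
  have "?x = ip (lp k * P1 al be k) (lp k * P2 al be k) (lm k * Q1 al be k) (lm k * Q2 al be k)"
    unfolding eigP[symmetric] by (rule unitary[symmetric])
  also have "\<dots> = (cnj (lp k) * lm k) * ?x" by (simp add: ip_def algebra_simps)
  finally have "(1 - cnj (lp k) * lm k) * ?x = 0" by (simp add: algebra_simps)
  then show ?thesis using cnj_lp_lm[of k] by simp
qed

lemma ortho': "ip (Q1 al be k) (Q2 al be k) (P1 al be k) (P2 al be k) = 0"
proof -
  have "ip (Q1 al be k) (Q2 al be k) (P1 al be k) (P2 al be k) = cnj (ip (P1 al be k) (P2 al be k) (Q1 al be k) (Q2 al be k))"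
    by (simp add: ip_def mult.commute)
  then show ?thesis using ortho by simp
qed

lemma PQ_sum: "P1 al be k + Q1 al be k = al" "P2 al be k + Q2 al be k = be"
proof -
  have "M1 al be k - lm k * al + (lp k * al - M1 al be k) = al * Dd k"
    "M2 al be k - lm k * be + (lp k * be - M2 al be k) = be * Dd k" by (simp_all add: Dd_def algebra_simps)
  then show "P1 al be k + Q1 al be k = al" "P2 al be k + Q2 al be k = be"
    using Dd_nz[of k] unfolding P1_def Q1_def P2_def Q2_def add_divide_distrib[symmetric] by simp_all
qed

lemma ip_self: "ip x1 x2 x1 x2 = complex_of_real ((cmod x1)\<^sup>2 + (cmod x2)\<^sup>2)"
  unfolding ip_def of_real_add complex_norm_square by (simp add: mult.commute)

lemma norm_sum_PQ:
  "(cmod (P1 al be k))\<^sup>2 + (cmod (P2 al be k))\<^sup>2 + ((cmod (Q1 al be k))\<^sup>2 + (cmod (Q2 al be k))\<^sup>2)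
   = (cmod al)\<^sup>2 + (cmod be)\<^sup>2"
proof -
  have "ip al be al be = ip (P1 al be k + Q1 al be k) (P2 al be k + Q2 al be k) (P1 al be k + Q1 al be k) (P2 al be k + Q2 al be k)"
    by (simp add: PQ_sum)
  also have "\<dots> = ip (P1 al be k) (P2 al be k) (P1 al be k) (P2 al be k) + ip (Q1 al be k) (Q2 al be k) (Q1 al be k) (Q2 al be k)
     + ip (P1 al be k) (P2 al be k) (Q1 al be k) (Q2 al be k) + ip (Q1 al be k) (Q2 al be k) (P1 al be k) (P2 al be k)"
    by (simp add: ip_def algebra_simps)
  finally show ?thesis unfolding ortho ortho' ip_self by (simp flip: of_real_add)
qed

lemma PQ_bound:
  assumes "(cmod al)\<^sup>2 + (cmod be)\<^sup>2 = 1"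
  shows "cmod (P1 al be k) \<le> 1" "cmod (P2 al be k) \<le> 1" "cmod (Q1 al be k) \<le> 1" "cmod (Q2 al be k) \<le> 1"
proof -
  note h = norm_sum_PQ[of al be k, unfolded assms]
  have sq: "x\<^sup>2 \<le> 1 \<Longrightarrow> x \<ge> 0 \<Longrightarrow> x \<le> 1" for x :: real by (simp add: abs_square_le_1)
  have a: "(cmod (P1 al be k))\<^sup>2 \<ge> 0" "(cmod (P2 al be k))\<^sup>2 \<ge> 0" "(cmod (Q1 al be k))\<^sup>2 \<ge> 0" "(cmod (Q2 al be k))\<^sup>2 \<ge> 0"
    by simp_all
  show "cmod (P1 al be k) \<le> 1" by (rule sq) (use h a in linarith, simp)
  show "cmod (P2 al be k) \<le> 1" by (rule sq) (use h a in linarith, simp)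
  show "cmod (Q1 al be k) \<le> 1" by (rule sq) (use h a in linarith, simp)
  show "cmod (Q2 al be k) \<le> 1" by (rule sq) (use h a in linarith, simp)
qed

lemma th_deriv: "(th has_real_derivative Hv k) (at k)"
proof -
  have b: "-1 < sin k / sqrt 2" "sin k / sqrt 2 < 1" using sin_k_bound[of k] by (simp_all only: abs_less_iff) linarith+
  have d1: "((\<lambda>k. sin k / sqrt 2) has_real_derivative cos k / sqrt 2) (at k)"
    by (rule DERIV_cdivide) (rule DERIV_sin)
  have d2: "(arcsin has_real_derivative inverse (sqrt (1 - (sin k / sqrt 2)\<^sup>2))) (at (sin k / sqrt 2))"
    by (rule DERIV_arcsin) (use b in auto)
  have d: "(th has_real_derivative - (inverse (sqrt (1 - (sin k / sqrt 2)\<^sup>2)) * (cos k / sqrt 2))) (at k)"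
    unfolding th_def[abs_def] by (rule DERIV_minus, rule DERIV_chain2[OF d2 d1])
  have e: "sqrt (1 - (sin k / sqrt 2)\<^sup>2) * sqrt 2 = sqrt (1 + (cos k)\<^sup>2)"
  proof -
    have "(1 - (sin k / sqrt 2)\<^sup>2) * 2 = 1 + (cos k)\<^sup>2"
      using sin_cos_squared_add[of k] by (simp add: power_divide algebra_simps)
    then show ?thesis by (metis real_sqrt_mult)
  qed
  have "- (inverse (sqrt (1 - (sin k / sqrt 2)\<^sup>2)) * (cos k / sqrt 2)) = Hv k"
    unfolding Hv_def e[symmetric] by (simp add: field_simps)
  then show ?thesis using d by simp
qed

lemma isCont_th: "isCont th k"
  using th_deriv by (rule DERIV_isCont)

lemma isCont_th'[continuous_intros]: "isCont f x \<Longrightarrow> isCont (\<lambda>x. th (f x)) x"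
  using isCont_o2[OF _ isCont_th] by blast

lemma isCont_Hv: "isCont Hv k"
proof -
  have "0 < 1 + (cos k)\<^sup>2" using zero_le_power2[of "cos k"] by linarith
  then have "sqrt (1 + (cos k)\<^sup>2) \<noteq> 0" by simp
  then show ?thesis unfolding Hv_def[abs_def] by (intro continuous_intros) auto
qed

lemma isCont_lp[continuous_intros]: "isCont lp k"
  unfolding lp_def[abs_def] by (intro continuous_intros)
lemma isCont_lm[continuous_intros]: "isCont lm k"
  unfolding lm_def[abs_def] by (intro continuous_intros)
lemma isCont_Dd[continuous_intros]: "isCont Dd k"
  unfolding Dd_def[abs_def] by (intro continuous_intros)

lemma isCont_P1: "isCont (P1 al be) k" and isCont_P2: "isCont (P2 al be) k"
  and isCont_Q1: "isCont (Q1 al be) k" and isCont_Q2: "isCont (Q2 al be) k"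
  unfolding P1_def[abs_def] P2_def[abs_def] Q1_def[abs_def] Q2_def[abs_def] M1_def[abs_def] M2_def[abs_def]
  using Dd_nz[of k] by (auto intro!: continuous_intros)

lemma ucont:
  fixes f :: "real \<Rightarrow> 'a::real_normed_vector"
  assumes c: "\<And>x. isCont f x" and e: "0 < e"
  shows "\<exists>d>0. \<forall>k\<in>{0..2*pi}. \<forall>k'. \<bar>k' - k\<bar> < d \<longrightarrow> norm (f k' - f k) < e"
proof -
  have "uniformly_continuous_on {-1..2*pi+1} f"
    by (rule compact_uniformly_continuous) (auto intro!: continuous_at_imp_continuous_on c)
  then obtain d where d: "d > 0" "\<And>x x'. x \<in> {-1..2*pi+1} \<Longrightarrow> x' \<in> {-1..2*pi+1} \<Longrightarrow> dist x' x < d \<Longrightarrow> dist (f x') (f x) < e"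
    unfolding uniformly_continuous_on_def using e by metis
  show ?thesis
  proof (rule exI[of _ "min d 1"], intro conjI ballI allI impI)
    show "0 < min d 1" using d by simp
    fix k k' assume k: "k \<in> {0..2*pi}" and kk: "\<bar>k' - k\<bar> < min d 1"
    then have "k \<in> {-1..2*pi+1}" "k' \<in> {-1..2*pi+1}" "dist k' k < d" by (auto simp: dist_real_def)
    from d(2)[OF this] show "norm (f k' - f k) < e" by (simp add: dist_norm)
  qed
qed

lemma iexp_dist: "norm (iexp a - iexp b) \<le> \<bar>a - b\<bar>"
proof -
  have "iexp b * iexp (a - b) = iexp a" unfolding iexp_add[symmetric] by simp
  then have "iexp a - iexp b = iexp b * (iexp (a - b) - 1)"
    by (simp add: right_diff_distrib)
  moreover have "cmod (iexp (a - b) - 1) \<le> \<bar>a - b\<bar>" using iexp_approx1[of "a - b" 0] by simp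
  moreover have "norm (iexp b) = 1" by (simp add: norm_exp_i_times)
  ultimately show ?thesis by (simp add: norm_mult)
qed

lemma mvt_th: "\<exists>\<xi>. \<bar>\<xi> - k\<bar> \<le> \<bar>s\<bar> \<and> th (k + s) - th k = s * Hv \<xi>"
proof (cases "s = 0")
  case True then show ?thesis by (intro exI[of _ k]) simp
next
  case False
  show ?thesis
  proof (cases "s > 0")
    case True
    obtain z where "k < z" "z < k + s" "th (k + s) - th k = (k + s - k) * Hv z"
      using MVT2[of k "k + s" th Hv] True th_deriv by auto
    then show ?thesis by (intro exI[of _ z]) auto
  next
    case False2: False
    then have "s < 0" using False by simp
    obtain z where "k + s < z" "z < k" "th k - th (k + s) = (k - (k + s)) * Hv z"
      using MVT2[of "k + s" k th Hv] \<open>s < 0\<close> th_deriv by auto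
    then show ?thesis using \<open>s < 0\<close> by (intro exI[of _ z]) (auto simp: algebra_simps)
  qed
qed

lemma phase_conv:
  assumes "0 < e"
  shows "\<exists>d>0. \<forall>k\<in>{0..2*pi}. \<forall>n>0. \<bar>t\<bar> / real n < d \<longrightarrow>
     norm (iexp (real n * (th (k + t / real n) - th k)) - iexp (t * Hv k)) \<le> \<bar>t\<bar> * e"
proof -
  obtain d where d: "d > 0" "\<forall>k\<in>{0..2*pi}. \<forall>k'. \<bar>k' - k\<bar> < d \<longrightarrow> norm (Hv k' - Hv k) < e"
    using ucont[OF isCont_Hv assms] by blast
  show ?thesis
  proof (rule exI[of _ d], intro conjI ballI allI impI)
    fix k n assume k: "k \<in> {0..2*pi}" and n: "0 < n" and tn: "\<bar>t\<bar> / real n < d"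
    obtain \<xi> where xi: "\<bar>\<xi> - k\<bar> \<le> \<bar>t / real n\<bar>" "th (k + t / real n) - th k = t / real n * Hv \<xi>"
      using mvt_th by blast
    have eq: "real n * (th (k + t / real n) - th k) = t * Hv \<xi>" using n xi(2) by simp
    have "norm (iexp (real n * (th (k + t / real n) - th k)) - iexp (t * Hv k)) \<le> \<bar>t * Hv \<xi> - t * Hv k\<bar>"
      unfolding eq by (rule iexp_dist)
    also have "\<dots> = \<bar>t\<bar> * \<bar>Hv \<xi> - Hv k\<bar>" by (simp add: abs_mult[symmetric] algebra_simps)
    also have "\<dots> \<le> \<bar>t\<bar> * e"
    proof -
      have "\<bar>\<xi> - k\<bar> < d" using xi(1) tn n by (simp add: abs_div)
      then have "\<bar>Hv \<xi> - Hv k\<bar> < e" using d(2) k by auto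
      then show ?thesis by (simp add: mult_left_mono)
    qed
    finally show "norm (iexp (real n * (th (k + t / real n) - th k)) - iexp (t * Hv k)) \<le> \<bar>t\<bar> * e" .
  qed (use d in simp)
qed

lemma integral_unif_conv:
  fixes f :: "nat \<Rightarrow> real \<Rightarrow> complex"
  assumes int: "\<And>n. f n integrable_on {a..b}" "g integrable_on {a..b}" and ab: "a \<le> b"
    and u: "\<And>e. e > 0 \<Longrightarrow> eventually (\<lambda>n. \<forall>k\<in>{a..b}. norm (f n k - g k) \<le> e) sequentially"
  shows "(\<lambda>n. integral {a..b} (f n)) \<longlonglongrightarrow> integral {a..b} g"
proof (rule LIMSEQ_I)
  fix r :: real assume r: "0 < r"
  define e where "e = r / (b - a + 1)"
  have e: "e > 0" using r ab by (simp add: e_def)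
  obtain N where N: "\<And>n. n \<ge> N \<Longrightarrow> \<forall>k\<in>{a..b}. norm (f n k - g k) \<le> e"
    using u[OF e] unfolding eventually_sequentially by blast
  show "\<exists>no. \<forall>n\<ge>no. norm (integral {a..b} (f n) - integral {a..b} g) < r"
  proof (intro exI allI impI)
    fix n assume "N \<le> n"
    have "integral {a..b} (f n) - integral {a..b} g = integral {a..b} (\<lambda>k. f n k - g k)"
      by (rule integral_diff[symmetric]) (use int in auto)
    also have "norm \<dots> \<le> e * (b - a)"
      using has_integral_bound[of e "\<lambda>k. f n k - g k" _ a b] e N[OF \<open>N \<le> n\<close>] int ab
      by (auto intro!: integrable_integral integrable_diff)
    also have "\<dots> < r" using r ab by (simp add: e_def field_simps)
    finally show "norm (integral {a..b} (f n) - integral {a..b} g) < r" .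
  qed
qed

definition Gf where
  "Gf al be n t k = cnj (FA al be n k) * FA al be n (k + t / real n) + cnj (FB al be n k) * FB al be n (k + t / real n)"
definition pp where "pp al be k = ip (P1 al be k) (P2 al be k) (P1 al be k) (P2 al be k)"
definition qq where "qq al be k = ip (Q1 al be k) (Q2 al be k) (Q1 al be k) (Q2 al be k)"
definition Lf where
  "Lf al be t k = iexp (t * Hv k) * pp al be k + iexp (- (t * Hv k)) * qq al be k"

lemma iexp_pow: "iexp x ^ n = iexp (real n * x)"
  by (simp add: exp_of_nat_mult[symmetric] mult_ac)

lemma norm_lp[simp]: "norm (lp k) = 1" and norm_lm[simp]: "norm (lm k) = 1"
  by (simp_all add: lp_def lm_def norm_exp_i_times)

lemma ip_diff: "ip x1 x2 y1' y2' - ip x1 x2 y1 y2 = ip x1 x2 (y1' - y1) (y2' - y2)"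
  by (simp add: ip_def algebra_simps)

lemma ip_bound: "norm x1 \<le> 1 \<Longrightarrow> norm x2 \<le> 1 \<Longrightarrow> norm (ip x1 x2 y1 y2) \<le> norm y1 + norm y2"
proof -
  assume a: "norm x1 \<le> 1" "norm x2 \<le> 1"
  have "norm (ip x1 x2 y1 y2) \<le> norm x1 * norm y1 + norm x2 * norm y2"
    unfolding ip_def by (rule order_trans[OF norm_triangle_ineq]) (simp add: norm_mult)
  also have "\<dots> \<le> 1 * norm y1 + 1 * norm y2"
    by (intro add_mono mult_right_mono) (use a in auto)
  finally show ?thesis by simp
qed

lemma G_expand:
  "Gf al be n t k =
     iexp (real n * (th (k + t / real n) - th k)) * ip (P1 al be k) (P2 al be k) (P1 al be (k + t / real n)) (P2 al be (k + t / real n))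
   + (cnj (lp k) ^ n * lm (k + t / real n) ^ n) * ip (P1 al be k) (P2 al be k) (Q1 al be (k + t / real n)) (Q2 al be (k + t / real n))
   + (cnj (lm k) ^ n * lp (k + t / real n) ^ n) * ip (Q1 al be k) (Q2 al be k) (P1 al be (k + t / real n)) (P2 al be (k + t / real n))
   + iexp (- (real n * (th (k + t / real n) - th k))) * ip (Q1 al be k) (Q2 al be k) (Q1 al be (k + t / real n)) (Q2 al be (k + t / real n))"
proof -
  let ?k = "k + t / real n"
  have a: "cnj (lp k) ^ n * lp ?k ^ n = iexp (real n * (th ?k - th k))"
    unfolding power_mult_distrib[symmetric] lp_def cnj_iexp iexp_add[symmetric] iexp_pow by (simp add: algebra_simps)
  have b: "cnj (lm k) ^ n * lm ?k ^ n = iexp (- (real n * (th ?k - th k)))"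
  proof -
    have c: "cnj (lm k) * lm ?k = iexp (th k - th ?k)"
      unfolding lm_def complex_cnj_minus cnj_iexp minus_minus mult_minus_left mult_minus_right minus_minus iexp_add[symmetric]
      by simp
    show ?thesis unfolding power_mult_distrib[symmetric] c iexp_pow
      by (rule arg_cong[where f=iexp]) (simp add: algebra_simps)
  qed
  show ?thesis
    unfolding Gf_def spectral[THEN conjunct1] spectral[THEN conjunct2] a[symmetric] b[symmetric]
    by (simp add: ip_def algebra_simps)
qed

lemma G_L_bound:
  assumes nrm: "(cmod al)\<^sup>2 + (cmod be)\<^sup>2 = 1"
  shows "norm (Gf al be n t k - Lf al be t k) \<le>
    2 * norm (iexp (real n * (th (k + t / real n) - th k)) - iexp (t * Hv k)) * 2
    + 2 * (norm (P1 al be (k + t / real n) - P1 al be k) + norm (P2 al be (k + t / real n) - P2 al be k))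
    + 2 * (norm (Q1 al be (k + t / real n) - Q1 al be k) + norm (Q2 al be (k + t / real n) - Q2 al be k))"
proof -
  let ?k = "k + t / real n"
  define X where "X = real n * (th ?k - th k)"
  define Y where "Y = t * Hv k"
  define pP where "pP = ip (P1 al be k) (P2 al be k) (P1 al be ?k) (P2 al be ?k)"
  define pQ where "pQ = ip (P1 al be k) (P2 al be k) (Q1 al be ?k) (Q2 al be ?k)"
  define qP where "qP = ip (Q1 al be k) (Q2 al be k) (P1 al be ?k) (P2 al be ?k)"
  define qQ where "qQ = ip (Q1 al be k) (Q2 al be k) (Q1 al be ?k) (Q2 al be ?k)"
  define dP where "dP = norm (P1 al be ?k - P1 al be k) + norm (P2 al be ?k - P2 al be k)"
  define dQ where "dQ = norm (Q1 al be ?k - Q1 al be k) + norm (Q2 al be ?k - Q2 al be k)"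
  note B = PQ_bound[OF nrm]
  have "Gf al be n t k - Lf al be t k =
     (iexp X - iexp Y) * pP + iexp Y * (pP - pp al be k)
     + (cnj (lp k) ^ n * lm ?k ^ n) * pQ + (cnj (lm k) ^ n * lp ?k ^ n) * qP
     + (iexp (-X) - iexp (-Y)) * qQ + iexp (-Y) * (qQ - qq al be k)"
    unfolding G_expand Lf_def X_def Y_def pP_def pQ_def qP_def qQ_def by (simp add: algebra_simps)
  also have "norm \<dots> \<le> norm (iexp X - iexp Y) * 2 + dP + dQ + dP + norm (iexp X - iexp Y) * 2 + dQ"
  proof -
    have "norm pP \<le> norm (P1 al be ?k) + norm (P2 al be ?k)" unfolding pP_def by (rule ip_bound) (simp_all add: B)
    moreover have "norm qQ \<le> norm (Q1 al be ?k) + norm (Q2 al be ?k)" unfolding qQ_def by (rule ip_bound) (simp_all add: B)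
    ultimately have n1: "norm (pP) \<le> 2" "norm qQ \<le> 2" using B[of ?k] by linarith+
    have n2: "norm (pP - pp al be k) \<le> dP" unfolding pP_def pp_def ip_diff dP_def
      by (rule ip_bound) (simp_all add: B)
    have n3: "norm (qQ - qq al be k) \<le> dQ" unfolding qQ_def qq_def ip_diff dQ_def
      by (rule ip_bound) (simp_all add: B)
    have n4: "norm pQ \<le> dQ"
    proof -
      have "pQ = pQ - ip (P1 al be k) (P2 al be k) (Q1 al be k) (Q2 al be k)" by (simp add: ortho)
      also have "\<dots> = ip (P1 al be k) (P2 al be k) (Q1 al be ?k - Q1 al be k) (Q2 al be ?k - Q2 al be k)"
        unfolding pQ_def ip_diff ..
      finally show ?thesis unfolding dQ_def using ip_bound B by simp
    qed
    have n5: "norm qP \<le> dP"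
    proof -
      have "qP = qP - ip (Q1 al be k) (Q2 al be k) (P1 al be k) (P2 al be k)" by (simp add: ortho')
      also have "\<dots> = ip (Q1 al be k) (Q2 al be k) (P1 al be ?k - P1 al be k) (P2 al be ?k - P2 al be k)"
        unfolding qP_def ip_diff ..
      finally show ?thesis unfolding dP_def using ip_bound B by simp
    qed
    have n6: "norm (iexp (-X) - iexp (-Y)) = norm (iexp X - iexp Y)"
    proof -
      have "iexp (-X) - iexp (-Y) = cnj (iexp X - iexp Y)" by (simp only: complex_cnj_diff cnj_iexp)
      then show ?thesis by (simp only: complex_mod_cnj)
    qed
    have u: "norm (iexp Y) = 1" "norm (iexp (-Y)) = 1" by (simp_all add: norm_exp_i_times)
    have v: "norm (cnj (lp k) ^ n * lm ?k ^ n) = 1" "norm (cnj (lm k) ^ n * lp ?k ^ n) = 1"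
      by (simp_all add: norm_mult norm_power)
    have t6: "norm (a+b+c+d+e+f) \<le> norm a + norm b + norm c + norm d + norm e + norm f" for a b c d e f :: complex
      using norm_triangle_ineq[of "a+b+c+d+e" f] norm_triangle_ineq[of "a+b+c+d" e]
        norm_triangle_ineq[of "a+b+c" d] norm_triangle_ineq[of "a+b" c] norm_triangle_ineq[of a b] by linarith
    have w: "norm (iexp X - iexp Y) \<ge> 0" by simp
    show ?thesis
      apply (rule order_trans[OF t6])
      apply (simp only: norm_mult u v n6 mult_1_left)
      using n1 n2 n3 n4 n5 mult_left_mono[OF n1(1) w] mult_left_mono[OF n1(2) w]
      by (simp add: algebra_simps norm_power)
  qed
  finally show ?thesis unfolding X_def Y_def dP_def dQ_def by simp
qed

lemma isCont_Lf: "isCont (Lf al be t) k"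
  unfolding Lf_def[abs_def] pp_def[abs_def] qq_def[abs_def] ip_def
  by (intro continuous_intros isCont_Hv isCont_P1 isCont_P2 isCont_Q1 isCont_Q2)

lemma Lf_integrable: "Lf al be t integrable_on {a..b}"
  by (rule integrable_continuous_interval) (auto intro!: continuous_at_imp_continuous_on isCont_Lf)

lemma Gf_has_integral:
  "(Gf al be n t has_integral
     (2 * pi * (\<Sum>x\<in>{-int n..int n}. complex_of_real ((cmod (fst (hw al be n x)))\<^sup>2 + (cmod (snd (hw al be n x)))\<^sup>2)
        * iexp (t / real n * of_int x)))) {0..2*pi}"
proof -
  have "((\<lambda>k. Gf al be n t k) has_integral
     (2 * pi * (\<Sum>x\<in>{-int n..int n}. cnj (fst (hw al be n x)) * fst (hw al be n x) * iexp (t / real n * of_int x)) +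
      2 * pi * (\<Sum>x\<in>{-int n..int n}. cnj (snd (hw al be n x)) * snd (hw al be n x) * iexp (t / real n * of_int x)))) {0..2*pi}"
    unfolding Gf_def FA_def FB_def by (intro has_integral_add parseval)
  moreover have "cnj z * z = complex_of_real ((cmod z)\<^sup>2)" for z
    by (subst complex_norm_square) (rule mult.commute)
  ultimately show ?thesis
    by (simp add: distrib_left[symmetric] sum.distrib[symmetric] distrib_right of_real_add)
qed

lemma eventually_small:
  assumes "d > 0"
  shows "eventually (\<lambda>n. 0 < n \<and> \<bar>t\<bar> / real n < d) sequentially"
proof -
  obtain N :: nat where N: "\<bar>t\<bar> / d < real N" using reals_Archimedean2 by blast
  show ?thesis
  proof (rule eventually_sequentiallyI[of "Suc N"])
    fix n assume "Suc N \<le> n"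
    then have n: "0 < n" "real N < real n" by auto
    have "\<bar>t\<bar> < d * real N" using N assms by (simp add: divide_less_eq mult.commute)
    also have "\<dots> < d * real n" using n assms by simp
    finally have "\<bar>t\<bar> < d * real n" .
    then show "0 < n \<and> \<bar>t\<bar> / real n < d" using n by (simp add: divide_less_eq mult.commute)
  qed
qed

lemma Gf_conv:
  assumes nrm: "(cmod al)\<^sup>2 + (cmod be)\<^sup>2 = 1"
  shows "(\<lambda>n. integral {0..2*pi} (Gf al be n t)) \<longlonglongrightarrow> integral {0..2*pi} (Lf al be t)"
proof (rule integral_unif_conv)
  show "Gf al be n t integrable_on {0..2*pi}" for n using Gf_has_integral by blast
  show "Lf al be t integrable_on {0..2*pi}" by (rule Lf_integrable)
  show "0 \<le> 2 * pi" by simp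
  fix e :: real assume e: "e > 0"
  define \<eta> where "\<eta> = e / (4 * \<bar>t\<bar> + 5)"
  have eta: "\<eta> > 0" using e by (simp add: \<eta>_def add_nonneg_pos)
  obtain d0 where d0: "d0 > 0" "\<forall>k\<in>{0..2*pi}. \<forall>n>0. \<bar>t\<bar> / real n < d0 \<longrightarrow>
     norm (iexp (real n * (th (k + t / real n) - th k)) - iexp (t * Hv k)) \<le> \<bar>t\<bar> * \<eta>"
    using phase_conv[OF eta] by blast
  have eta2: "\<eta>/2 > 0" using eta by simp
  obtain d1 where d1: "d1 > 0" "\<forall>k\<in>{0..2*pi}. \<forall>k'. \<bar>k' - k\<bar> < d1 \<longrightarrow> norm (P1 al be k' - P1 al be k) < \<eta>/2"
    using ucont[OF isCont_P1 eta2] by blast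
  obtain d2 where d2: "d2 > 0" "\<forall>k\<in>{0..2*pi}. \<forall>k'. \<bar>k' - k\<bar> < d2 \<longrightarrow> norm (P2 al be k' - P2 al be k) < \<eta>/2"
    using ucont[OF isCont_P2 eta2] by blast
  obtain d3 where d3: "d3 > 0" "\<forall>k\<in>{0..2*pi}. \<forall>k'. \<bar>k' - k\<bar> < d3 \<longrightarrow> norm (Q1 al be k' - Q1 al be k) < \<eta>/2"
    using ucont[OF isCont_Q1 eta2] by blast
  obtain d4 where d4: "d4 > 0" "\<forall>k\<in>{0..2*pi}. \<forall>k'. \<bar>k' - k\<bar> < d4 \<longrightarrow> norm (Q2 al be k' - Q2 al be k) < \<eta>/2"
    using ucont[OF isCont_Q2 eta2] by blast
  define d where "d = min d0 (min d1 (min d2 (min d3 d4)))"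
  have d: "d > 0" using d0 d1 d2 d3 d4 by (simp add: d_def)
  show "eventually (\<lambda>n. \<forall>k\<in>{0..2*pi}. norm (Gf al be n t k - Lf al be t k) \<le> e) sequentially"
    using eventually_small[OF d, of t]
  proof eventually_elim
    case (elim n)
    then have n: "0 < n" "\<bar>t\<bar> / real n < d" by auto
    show ?case
    proof
      fix k assume k: "k \<in> {0..2*pi}"
      have kk: "\<bar>(k + t / real n) - k\<bar> < d" using n by (simp add: abs_div)
      have a: "norm (iexp (real n * (th (k + t / real n) - th k)) - iexp (t * Hv k)) \<le> \<bar>t\<bar> * \<eta>"
        using d0(2) k n unfolding d_def by auto
      have b: "norm (P1 al be (k + t / real n) - P1 al be k) < \<eta>/2" "norm (P2 al be (k + t / real n) - P2 al be k) < \<eta>/2"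
        "norm (Q1 al be (k + t / real n) - Q1 al be k) < \<eta>/2" "norm (Q2 al be (k + t / real n) - Q2 al be k) < \<eta>/2"
        using d1(2) d2(2) d3(2) d4(2) k kk unfolding d_def by auto
      have "norm (Gf al be n t k - Lf al be t k) \<le> 2 * (\<bar>t\<bar> * \<eta>) * 2 + 2 * (\<eta>/2 + \<eta>/2) + 2 * (\<eta>/2 + \<eta>/2)"
      proof -
        have "2 * norm (iexp (real n * (th (k + t / real n) - th k)) - iexp (t * Hv k)) * 2 \<le> 2 * (\<bar>t\<bar> * \<eta>) * 2"
          using a by simp
        then show ?thesis using G_L_bound[OF nrm, of n t k] b by (smt (verit))
      qed
      also have "\<dots> = (4 * \<bar>t\<bar> + 4) * \<eta>" by (simp add: algebra_simps)
      also have "\<dots> \<le> e" using eta e by (simp add: \<eta>_def field_simps)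
      finally show "norm (Gf al be n t k - Lf al be t k) \<le> e" .
    qed
  qed
qed

lemma pp_ipv: "pp al be k = ip (P1 al be k) (P2 al be k) al be"
proof -
  have "ip (P1 al be k) (P2 al be k) al be = ip (P1 al be k) (P2 al be k) (P1 al be k + Q1 al be k) (P2 al be k + Q2 al be k)"
    by (simp add: PQ_sum)
  also have "\<dots> = pp al be k + ip (P1 al be k) (P2 al be k) (Q1 al be k) (Q2 al be k)"
    unfolding pp_def ip_def by (simp add: algebra_simps)
  finally show ?thesis by (simp add: ortho)
qed

lemma ip_P_v: "ip (P1 al be k) (P2 al be k) al be =
   (cnj (M1 al be k) * al + cnj (M2 al be k) * be - cnj (lm k) * (cnj al * al + cnj be * be)) / complex_of_real (2 * cos (th k))"
proof -
  have "cnj (Dd k) = complex_of_real (2 * cos (th k))" by (simp add: Dd_eq)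
  then show ?thesis unfolding ip_def P1_def P2_def Dd_eq using cos_th_pos[of k]
    by (simp add: field_simps)
qed

lemma alpha_beta_prods:
  "cnj (alpha0 \<omega>) * alpha0 \<omega> = 1/2" "cnj (beta0 \<omega>) * beta0 \<omega> = 1/2"
  "cnj (beta0 \<omega>) * alpha0 \<omega> = - \<i> * cis (\<omega> 0) / 2"
  "cnj (alpha0 \<omega>) * beta0 \<omega> = \<i> * cis (- \<omega> 0) / 2"
  unfolding alpha0_def beta0_def
  by (simp_all add: field_simps sq2sq cis_mult cis_cnj)

lemma cnj_iexpm[simp]: "cnj (exp (- (\<i> * complex_of_real x))) = iexp x"
  by (simp add: exp_cnj)

lemma s22: "sqrt 2 * (sqrt 2 * x) = 2 * (x::real)"
  by (simp add: mult.assoc[symmetric])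

lemma N_eq:
  "cnj (M1 (alpha0 \<omega>) (beta0 \<omega>) k) * alpha0 \<omega> + cnj (M2 (alpha0 \<omega>) (beta0 \<omega>) k) * beta0 \<omega>
     - cnj (lm k) * (cnj (alpha0 \<omega>) * alpha0 \<omega> + cnj (beta0 \<omega>) * beta0 \<omega>)
   = complex_of_real (sin (k + \<omega> 0) / sqrt 2 + cos (th k))"
proof -
  let ?a = "alpha0 \<omega>" and ?b = "beta0 \<omega>" and ?s = "complex_of_real (sqrt 2)"
  have 1: "cnj (M1 ?a ?b k) * ?a = iexp k * (cnj ?a * ?a + cnj ?b * ?a) / ?s"
    unfolding M1_def by (simp add: cnj_iexp algebra_simps)
  have 2: "cnj (M2 ?a ?b k) * ?b = iexp (-k) * (cnj ?a * ?b - cnj ?b * ?b) / ?s"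
    unfolding M2_def by (simp add: cnj_iexp algebra_simps)
  have 3: "cnj (lm k) = - iexp (th k)" unfolding lm_def by (simp add: cnj_iexp)
  show ?thesis
    unfolding 1 2 3 alpha_beta_prods iexp_cis
    by (simp add: complex_eq_iff sin_th cos_add sin_add field_simps s22)
qed

lemma sqrt2_cos_th: "sqrt 2 * cos (th k) = sqrt (1 + (cos k)\<^sup>2)"
proof -
  have "2 * (1 - (sin k / sqrt 2)\<^sup>2) = 1 + (cos k)\<^sup>2"
    using sin_cos_squared_add[of k] by (simp add: power_divide algebra_simps)
  then show ?thesis unfolding cos_th by (metis real_sqrt_mult)
qed

definition pfun :: "real \<Rightarrow> real \<Rightarrow> real" where
  "pfun w k = 1/2 + sin (k + w) / (2 * sqrt (1 + (cos k)\<^sup>2))"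

lemma pp_formula: "pp (alpha0 \<omega>) (beta0 \<omega>) k = complex_of_real (pfun (\<omega> 0) k)"
proof -
  have r: "cos (th k) > 0" by (rule cos_th_pos)
  have "pp (alpha0 \<omega>) (beta0 \<omega>) k = complex_of_real ((sin (k + \<omega> 0) / sqrt 2 + cos (th k)) / (2 * cos (th k)))"
    unfolding pp_ipv ip_P_v N_eq by simp
  also have "(sin (k + \<omega> 0) / sqrt 2 + cos (th k)) / (2 * cos (th k)) = pfun (\<omega> 0) k"
    unfolding pfun_def sqrt2_cos_th[symmetric] using r by (simp add: field_simps)
  finally show ?thesis .
qed

lemma norm_alpha_beta: "(cmod (alpha0 \<omega>))\<^sup>2 + (cmod (beta0 \<omega>))\<^sup>2 = 1"
  by (simp add: alpha0_def beta0_def norm_divide norm_mult power_divide)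

lemma qq_formula: "qq (alpha0 \<omega>) (beta0 \<omega>) k = complex_of_real (1 - pfun (\<omega> 0) k)"
proof -
  have h: "(cmod (P1 (alpha0 \<omega>) (beta0 \<omega>) k))\<^sup>2 + (cmod (P2 (alpha0 \<omega>) (beta0 \<omega>) k))\<^sup>2 +
    ((cmod (Q1 (alpha0 \<omega>) (beta0 \<omega>) k))\<^sup>2 + (cmod (Q2 (alpha0 \<omega>) (beta0 \<omega>) k))\<^sup>2) = 1"
    using norm_sum_PQ[of "alpha0 \<omega>" "beta0 \<omega>" k] norm_alpha_beta[of \<omega>] by simp
  have "pp (alpha0 \<omega>) (beta0 \<omega>) k + qq (alpha0 \<omega>) (beta0 \<omega>) k = 1"
    unfolding pp_def qq_def ip_self of_real_add[symmetric] h by simp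
  then show ?thesis unfolding pp_formula by (simp add: algebra_simps)
qed

lemma integral_flip: "integral {a..b} (\<lambda>k. f (a + b - k)) = integral {a..b::real} f"
proof -
  have "integral {a..b} (\<lambda>k. f (a + b - k)) = integral {a..b} ((\<lambda>y. f (- y)) \<circ> (+) (-(a+b)))"
    by (simp add: o_def algebra_simps)
  also have "\<dots> = integral {-b..-a} (\<lambda>y. f (- y))"
    unfolding integral_shift_Icc_real by (simp add: algebra_simps)
  also have "\<dots> = integral {a..b} f" by simp
  finally show ?thesis .
qed

lemma integral_flip2: "integral {0..c} (\<lambda>k. f (2*c - k)) = integral {c..2*c::real} f"
proof -
  have "integral {0..c} (\<lambda>k. f (2*c - k)) = integral {0..c} ((\<lambda>y. f (- y)) \<circ> (+) (-(2*c)))"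
    by (simp add: o_def algebra_simps)
  also have "\<dots> = integral {-(2*c)..-c} (\<lambda>y. f (- y))"
    unfolding integral_shift_Icc_real by (simp add: algebra_simps)
  also have "\<dots> = integral {c..2*c} f" by (rule Henstock_Kurzweil_Integration.integral_reflect_real)
  finally show ?thesis .
qed

lemma Hv_2pi: "Hv (2*pi - k) = Hv k" and Hv_pi: "Hv (pi - k) = - Hv k"
  by (simp_all add: Hv_def)

lemma pfun_sum: "pfun w k + pfun w (2*pi - k) = 1 - sin w * Hv k"
proof -
  have c: "cos (2*pi - k) = cos k" by (simp add: cos_diff)
  have s: "sin (k + w) + sin (2*pi - k + w) = 2 * sin w * cos k"
    by (simp add: sin_add cos_add sin_diff cos_diff)
  have S: "sqrt (1 + (cos k)\<^sup>2) > 0" using zero_le_power2[of "cos k"] by (simp add: add_pos_nonneg)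
  have "pfun w k + pfun w (2*pi - k) = 1 + (sin (k + w) + sin (2*pi - k + w)) / (2 * sqrt (1 + (cos k)\<^sup>2))"
    unfolding pfun_def c by (simp add: add_divide_distrib)
  also have "\<dots> = 1 - sin w * Hv k" unfolding s Hv_def using S by (simp add: field_simps)
  finally show ?thesis .
qed

lemma cont_interval: "(\<And>x. isCont f x) \<Longrightarrow> (f::real\<Rightarrow>complex) integrable_on {a..b}"
  by (rule integrable_continuous_interval) (auto intro!: continuous_at_imp_continuous_on)

lemma Lf_int:
  "integral {0..2*pi} (Lf (alpha0 \<omega>) (beta0 \<omega>) t) =
     2 * integral {0..pi} (\<lambda>k. iexp (t * Hv k) * complex_of_real (1 - sin (\<omega> 0) * Hv k))"
proof -
  let ?f = "Lf (alpha0 \<omega>) (beta0 \<omega>) t"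
  let ?h = "\<lambda>k. iexp (t * Hv k) * complex_of_real (1 - sin (\<omega> 0) * Hv k)"
  have cf: "isCont ?f x" for x by (rule isCont_Lf)
  have cf2: "isCont (\<lambda>k. ?f (2*pi - k)) x" for x
    by (rule isCont_o2[OF _ cf]) (intro continuous_intros)
  have ch: "isCont ?h x" for x by (intro continuous_intros isCont_Hv)
  have ch2: "isCont (\<lambda>k. ?h (0 + pi - k)) x" for x
    by (rule isCont_o2[OF _ ch]) (intro continuous_intros)
  have pt: "?f k + ?f (2*pi - k) = ?h k + ?h (0 + pi - k)" for k
  proof -
    have "?f k + ?f (2*pi - k) = iexp (t * Hv k) * complex_of_real (pfun (\<omega> 0) k + pfun (\<omega> 0) (2*pi - k))
       + iexp (- (t * Hv k)) * complex_of_real (2 - (pfun (\<omega> 0) k + pfun (\<omega> 0) (2*pi - k)))"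
      unfolding Lf_def pp_formula qq_formula Hv_2pi by (simp add: algebra_simps)
    also have "\<dots> = ?h k + ?h (0 + pi - k)"
      unfolding pfun_sum by (simp add: Hv_pi algebra_simps)
    finally show ?thesis .
  qed
  have "integral {0..2*pi} ?f = integral {0..pi} ?f + integral {pi..2*pi} ?f"
    by (rule Henstock_Kurzweil_Integration.integral_combine[symmetric]) (auto intro!: cont_interval cf)
  also have "integral {pi..2*pi} ?f = integral {0..pi} (\<lambda>k. ?f (2*pi - k))"
    by (rule integral_flip2[symmetric])
  also have "integral {0..pi} ?f + \<dots> = integral {0..pi} (\<lambda>k. ?f k + ?f (2*pi - k))"
    by (rule integral_add[symmetric]) (auto intro!: cont_interval cf cf2)
  also have "\<dots> = integral {0..pi} (\<lambda>k. ?h k + ?h (0 + pi - k))" unfolding pt ..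
  also have "\<dots> = integral {0..pi} ?h + integral {0..pi} (\<lambda>k. ?h (0 + pi - k))"
    by (rule integral_add; rule cont_interval; rule ch ch2)
  also have "integral {0..pi} (\<lambda>k. ?h (0 + pi - k)) = integral {0..pi} ?h"
    by (rule integral_flip)
  finally show ?thesis by simp
qed

lemma S_pos: "0 < 1 + (cos (k::real))\<^sup>2" using zero_le_power2[of "cos k"] by linarith

definition Hd :: "real \<Rightarrow> real" where
  "Hd k = sin k / ((1 + (cos k)\<^sup>2) * sqrt (1 + (cos k)\<^sup>2))"

lemma Hv_deriv: "(Hv has_real_derivative Hd k) (at k)"
proof -
  let ?S = "sqrt (1 + (cos k)\<^sup>2)"
  have S: "?S > 0" using S_pos[of k] by simp
  have d: "((\<lambda>k. sqrt (1 + (cos k)\<^sup>2)) has_real_derivative (inverse (?S) / 2 * (2 * cos k * - sin k))) (at k)"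
    by (rule derivative_eq_intros refl | use S_pos[of k] in simp)+
  have "(Hv has_real_derivative ((- (- sin k) * ?S - (- cos k) * (inverse (?S) / 2 * (2 * cos k * - sin k))) / (?S * ?S))) (at k)"
    unfolding Hv_def[abs_def] using DERIV_divide[OF DERIV_minus[OF DERIV_cos] d] S by simp
  moreover have "((- (- sin k) * ?S - (- cos k) * (inverse (?S) / 2 * (2 * cos k * - sin k))) / (?S * ?S)) = Hd k"
  proof -
    have SS: "?S * ?S = 1 + (cos k)\<^sup>2" using S_pos[of k] by simp
    have "((- (- sin k) * ?S - (- cos k) * (inverse (?S) / 2 * (2 * cos k * - sin k))) / (?S * ?S))
        = sin k * (?S * ?S - (cos k)\<^sup>2) / (?S * (?S * ?S))"
      using S by (simp add: field_simps power2_eq_square)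
    also have "\<dots> = Hd k" unfolding SS Hd_def by (simp add: mult.commute)
    finally show ?thesis .
  qed
  ultimately show ?thesis by simp
qed

lemma isCont_Hd: "isCont Hd k"
proof -
  have "(1 + (cos k)\<^sup>2) * sqrt (1 + (cos k)\<^sup>2) \<noteq> 0" using S_pos[of k] by simp
  then show ?thesis unfolding Hd_def[abs_def] by (intro continuous_intros) auto
qed

lemma Hd_nonneg: "k \<in> {0..pi} \<Longrightarrow> 0 \<le> Hd k"
  unfolding Hd_def using S_pos[of k] by (auto intro!: divide_nonneg_pos sin_ge_zero)

lemma Hv_0: "Hv 0 = - 1 / sqrt 2" and Hv_pi': "Hv pi = 1 / sqrt 2"
  by (simp_all add: Hv_def)

lemma Hv_bound: "\<bar>Hv k\<bar> \<le> 1 / sqrt 2"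
proof -
  have S: "sqrt (1 + (cos k)\<^sup>2) > 0" using S_pos[of k] by simp
  have "(cos k)\<^sup>2 * 2 \<le> 1 + (cos k)\<^sup>2" using abs_cos_le_one[of k] by (simp add: abs_square_le_1)
  then have "\<bar>cos k\<bar> * sqrt 2 \<le> sqrt (1 + (cos k)\<^sup>2)"
    by (metis real_sqrt_abs real_sqrt_le_iff real_sqrt_mult)
  then show ?thesis unfolding Hv_def using S by (simp add: abs_div field_simps)
qed

lemma fK_Hv:
  assumes k: "k \<in> {0<..<pi}"
  shows "f_K (Hv k) * Hd k = 1 / pi"
proof -
  let ?c = "cos k" and ?S = "sqrt (1 + (cos k)\<^sup>2)"
  have S: "?S > 0" and S2: "?S * ?S = 1 + ?c\<^sup>2" using S_pos[of k] by simp_all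
  have sk: "sin k > 0" using k by (auto intro!: sin_gt_zero)
  have h2: "(Hv k)\<^sup>2 = ?c\<^sup>2 / (1 + ?c\<^sup>2)" unfolding Hv_def using S_pos[of k] by (simp add: power_divide)
  have 1: "1 - (Hv k)\<^sup>2 = 1 / (1 + ?c\<^sup>2)" unfolding h2 using S_pos[of k] by (simp add: field_simps)
  have 2: "1 - 2 * (Hv k)\<^sup>2 = (sin k)\<^sup>2 / (1 + ?c\<^sup>2)"
    unfolding h2 using S_pos[of k] sin_cos_squared_add[of k] by (simp add: field_simps)
  have 3: "sqrt (1 - 2 * (Hv k)\<^sup>2) = sin k / ?S"
    unfolding 2 real_sqrt_divide using sk by simp
  have pos: "0 < 1 - 2 * (Hv k)\<^sup>2" unfolding 2 using sk S_pos[of k] by simp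
  have "\<bar>Hv k\<bar> < 1 / sqrt 2"
  proof -
    have "(Hv k)\<^sup>2 < 1/2" using pos by simp
    then have "sqrt ((Hv k)\<^sup>2) < sqrt (1/2)" by (rule real_sqrt_less_mono)
    then show ?thesis by (simp add: real_sqrt_divide)
  qed
  then have ind: "indicator {-1/sqrt 2<..<1/sqrt 2} (Hv k) = (1::real)"
    by (simp add: abs_less_iff)
  have "f_K (Hv k) = 1 / (pi * (1 / (1 + ?c\<^sup>2)) * (sin k / ?S))"
    unfolding f_K_def ind 3[symmetric] 1[symmetric] by (simp add: power2_eq_square)
  moreover have "0 < ?S * (1 + ?c\<^sup>2)" using S S_pos[of k] by simp
  ultimately show ?thesis unfolding Hd_def using S sk S2 by (simp add: field_simps)
qed

definition densN :: "real \<Rightarrow> real \<Rightarrow> real" where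
  "densN w k = indicator {0..pi} k * (1 - sin w * Hv k) / pi"
definition NN :: "real \<Rightarrow> real measure" where
  "NN w = density lborel (\<lambda>k. ennreal (densN w k))"
definition Wd :: "real \<Rightarrow> real \<Rightarrow> real" where
  "Wd w = (\<lambda>x. (1 - sin w * x) * f_K x)"
definition MM :: "real \<Rightarrow> real measure" where
  "MM w = density lborel (\<lambda>x. ennreal (Wd w x))"

lemma one_minus_pos: "\<bar>x\<bar> \<le> 1 / sqrt 2 \<Longrightarrow> 0 < 1 - sin w * x"
proof -
  assume x: "\<bar>x\<bar> \<le> 1 / sqrt 2"
  have "1 / sqrt 2 < (1::real)" by (simp add: divide_less_eq)
  have "\<bar>sin w\<bar> * \<bar>x\<bar> \<le> 1 * (1 / sqrt 2)" by (rule mult_mono) (use x in auto)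
  then have "\<bar>sin w * x\<bar> < 1" unfolding abs_mult using \<open>1 / sqrt 2 < 1\<close> by linarith
  then show ?thesis by (simp add: abs_less_iff)
qed

lemma densN_nonneg: "0 \<le> densN w k"
  unfolding densN_def using one_minus_pos[OF Hv_bound[of k], of w] by (simp add: indicator_def)

lemma isCont_Hv': "isCont Hv k" by (rule isCont_Hv)

lemma Hv_measurable[measurable]: "Hv \<in> borel_measurable borel"
  by (intro borel_measurable_continuous_onI continuous_at_imp_continuous_on ballI isCont_Hv)

lemma densN_measurable[measurable]: "densN w \<in> borel_measurable borel"
  unfolding densN_def[abs_def] by measurable

lemma fK_nonneg: "0 \<le> f_K x"
proof (cases "x \<in> {-1/sqrt 2<..<1/sqrt 2}")
  case True
  then have "\<bar>x\<bar> < 1 / sqrt 2" by auto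
  then have "\<bar>x\<bar>\<^sup>2 < (1 / sqrt 2)\<^sup>2" by (intro power_strict_mono) auto
  then have "x\<^sup>2 < 1/2" by (simp add: power_divide)
  then have "0 < 1 - x\<^sup>2" "0 < 1 - 2 * x\<^sup>2" by auto
  then show ?thesis unfolding f_K_def using True by simp
next
  case False then show ?thesis unfolding f_K_def by simp
qed

lemma Wd_nonneg: "0 \<le> Wd w x"
proof (cases "x \<in> {-1/sqrt 2<..<1/sqrt 2}")
  case True
  then have "\<bar>x\<bar> \<le> 1 / sqrt 2" by auto
  then show ?thesis unfolding Wd_def using one_minus_pos[of x w] fK_nonneg[of x] by simp
next
  case False then show ?thesis unfolding Wd_def f_K_def by simp
qed

lemma Wd_zero: "x \<notin> {-1/sqrt 2<..<1/sqrt 2} \<Longrightarrow> Wd w x = 0"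
  unfolding Wd_def f_K_def by simp

lemma Wd_measurable[measurable]: "Wd w \<in> borel_measurable borel"
  unfolding Wd_def f_K_def by measurable

lemma integral_Hv_0: "integral {0..pi} Hv = 0"
proof -
  have i: "Hv integrable_on {0..pi}"
    by (rule integrable_continuous_interval) (auto intro!: continuous_at_imp_continuous_on isCont_Hv)
  have "integral {0..pi} (\<lambda>k. Hv (0 + pi - k)) = integral {0..pi} Hv" by (rule integral_flip)
  moreover have "integral {0..pi} (\<lambda>k. Hv (0 + pi - k)) = - integral {0..pi} Hv"
    by (simp add: Hv_pi)
  ultimately show ?thesis by simp
qed

lemma densN_has_integral: "(densN w has_integral 1) UNIV"
proof -
  have i: "Hv integrable_on {0..pi}"
    by (rule integrable_continuous_interval) (auto intro!: continuous_at_imp_continuous_on isCont_Hv)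
  have "((\<lambda>k. (1 - sin w * Hv k) / pi) has_integral ((pi - 0) - sin w * integral {0..pi} Hv) / pi) {0..pi}"
    by (intro has_integral_divide has_integral_diff has_integral_mult_right integrable_integral i)
       (use has_integral_const_real[of "1::real" 0 pi] in simp)
  then have "((\<lambda>k. (1 - sin w * Hv k) / pi) has_integral 1) {0..pi}" by (simp add: integral_Hv_0)
  then have "((\<lambda>k. if k \<in> {0..pi} then (1 - sin w * Hv k) / pi else 0) has_integral 1) UNIV"
    by (simp only: has_integral_restrict_UNIV)
  moreover have "(\<lambda>k. if k \<in> {0..pi} then (1 - sin w * Hv k) / pi else 0) = densN w"
    by (auto simp: densN_def)
  ultimately show ?thesis by simp
qed

lemma prob_NN: "prob_space (NN w)"
proof
  have "emeasure (NN w) (space (NN w)) = (\<integral>\<^sup>+x. ennreal (densN w x) \<partial>lborel)"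
    unfolding NN_def by (simp add: emeasure_density)
  also have "\<dots> = ennreal 1"
    by (rule nn_integral_has_integral_lborel) (auto simp: densN_nonneg densN_has_integral)
  finally show "emeasure (NN w) (space (NN w)) = 1" by simp
qed

lemma MM_distr: "MM w = distr (NN w) borel Hv"
proof (rule measure_eqI)
  show "sets (MM w) = sets (distr (NN w) borel Hv)" by (simp add: MM_def)
  fix A assume "A \<in> sets (MM w)"
  then have A[measurable]: "A \<in> sets borel" by (simp add: MM_def)
  have "emeasure (MM w) A = (\<integral>\<^sup>+x. ennreal (Wd w x) * indicator A x \<partial>lborel)"
    unfolding MM_def by (rule emeasure_density) auto
  also have "\<dots> = (\<integral>\<^sup>+x. ennreal (Wd w x * indicator A x * indicator {Hv 0..Hv pi} x) \<partial>lborel)"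
  proof (rule nn_integral_cong)
    fix x
    show "ennreal (Wd w x) * indicator A x = ennreal (Wd w x * indicator A x * indicator {Hv 0..Hv pi} x)"
    proof (cases "x \<in> {-1/sqrt 2<..<1/sqrt 2}")
      case True
      then have "x \<in> {Hv 0..Hv pi}" by (auto simp: Hv_0 Hv_pi')
      then show ?thesis by (simp add: indicator_def)
    qed (simp add: Wd_zero)
  qed
  also have "\<dots> = (\<integral>\<^sup>+k. ennreal (Wd w (Hv k) * indicator A (Hv k) * Hd k * indicator {0..pi} k) \<partial>lborel)"
    by (rule nn_integral_substitution[where f="\<lambda>x. Wd w x * indicator A x"])
       (auto simp: set_borel_measurable_def Hv_deriv Hd_nonneg
             intro!: continuous_at_imp_continuous_on isCont_Hd)
  also have "\<dots> = (\<integral>\<^sup>+k. ennreal (densN w k) * indicator (Hv -` A) k \<partial>lborel)"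
  proof (rule nn_integral_cong_AE)
    have "AE k in lborel. k \<noteq> 0 \<and> k \<noteq> pi" using AE_lborel_singleton[of 0] AE_lborel_singleton[of pi] by eventually_elim auto
    then show "AE k in lborel. ennreal (Wd w (Hv k) * indicator A (Hv k) * Hd k * indicator {0..pi} k) =
        ennreal (densN w k) * indicator (Hv -` A) k"
    proof eventually_elim
      case (elim k)
      show ?case
      proof (cases "k \<in> {0..pi}")
        case True
        then have k: "k \<in> {0<..<pi}" using elim by auto
        have "Wd w (Hv k) * Hd k = (1 - sin w * Hv k) / pi"
          unfolding Wd_def using fK_Hv[OF k] by (simp add: field_simps)
        then have e: "Wd w (Hv k) * indicator A (Hv k) * Hd k * indicator {0..pi} k = densN w k * indicator A (Hv k)"
          using True by (simp add: densN_def indicator_def)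
        show ?thesis unfolding e by (cases "Hv k \<in> A") (simp_all add: indicator_def)
      qed (simp add: densN_def)
    qed
  qed
  also have "\<dots> = emeasure (NN w) (Hv -` A)"
    unfolding NN_def using measurable_sets[OF Hv_measurable A] by (intro emeasure_density[symmetric]) auto
  also have "\<dots> = emeasure (distr (NN w) borel Hv) A"
    by (subst emeasure_distr) (auto simp: NN_def)
  finally show "emeasure (MM w) A = emeasure (distr (NN w) borel Hv) A" .
qed

lemma real_distribution_MM: "real_distribution (MM w)"
proof -
  interpret N: prob_space "NN w" by (rule prob_NN)
  have "prob_space (distr (NN w) borel Hv)" by (rule N.prob_space_distr) (simp add: NN_def)
  then show ?thesis unfolding real_distribution_def real_distribution_axioms_def MM_distr by simp
qed

lemma char_MM:
  "char (MM w) t = (1/pi) *\<^sub>R integral {0..pi} (\<lambda>k. iexp (t * Hv k) * complex_of_real (1 - sin w * Hv k))"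
proof -
  let ?h = "\<lambda>k. iexp (t * Hv k) * complex_of_real (1 - sin w * Hv k)"
  have ch: "continuous_on {0..pi} (\<lambda>k. (1/pi) *\<^sub>R ?h k)"
    by (auto intro!: continuous_at_imp_continuous_on continuous_intros isCont_Hv)
  have "char (MM w) t = (CLINT k|NN w. iexp (t * Hv k))"
    unfolding char_def MM_distr by (subst integral_distr) (auto simp: NN_def)
  also have "\<dots> = (CLINT k|lborel. densN w k *\<^sub>R iexp (t * Hv k))"
    unfolding NN_def by (rule integral_density) (auto simp: densN_nonneg)
  also have "\<dots> = (CLINT k|lborel. indicator {0..pi} k *\<^sub>R ((1/pi) *\<^sub>R ?h k))"
    by (rule Bochner_Integration.integral_cong) (auto simp: densN_def indicator_def scaleR_conv_of_real)
  also have "\<dots> = set_lebesgue_integral lborel {0..pi} (\<lambda>k. (1/pi) *\<^sub>R ?h k)"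
    by (simp only: set_lebesgue_integral_def)
  also have "\<dots> = integral {0..pi} (\<lambda>k. (1/pi) *\<^sub>R ?h k)"
    by (rule set_borel_integral_eq_integral(2)) (rule borel_integrable_atLeastAtMost'[OF ch])
  also have "\<dots> = (1/pi) *\<^sub>R integral {0..pi} ?h" by (rule integral_cmul)
  finally show ?thesis .
qed

lemma measure_MM_Icc: "measure (MM w) {u..v} = integral {u..v} (Wd w)"
proof -
  interpret M: real_distribution "MM w" by (rule real_distribution_MM)
  let ?f = "\<lambda>x. Wd w x * indicator {u..v} x"
  have "ennreal (measure (MM w) {u..v}) = emeasure (MM w) {u..v}"
    by (rule M.emeasure_eq_measure[symmetric])
  also have "\<dots> = (\<integral>\<^sup>+x. ennreal (Wd w x) * indicator {u..v} x \<partial>lborel)"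
    unfolding MM_def by (rule emeasure_density) auto
  also have "\<dots> = (\<integral>\<^sup>+x. ennreal (?f x) \<partial>lborel)"
    by (rule nn_integral_cong) (simp add: indicator_def)
  finally have e: "(\<integral>\<^sup>+x. ennreal (?f x) \<partial>lborel) = ennreal (measure (MM w) {u..v})" by simp
  have "(?f has_integral measure (MM w) {u..v}) UNIV"
    by (rule nn_integral_has_integral) (auto simp: e Wd_nonneg)
  moreover have "?f = (\<lambda>x. if x \<in> {u..v} then Wd w x else 0)" by (auto simp: indicator_def)
  ultimately have "(Wd w has_integral measure (MM w) {u..v}) {u..v}"
    by (simp only: has_integral_restrict_UNIV)
  then show ?thesis by (rule integral_unique[symmetric])
qed

lemma MM_frontier: "emeasure (MM w) (frontier {u..v}) = 0"
proof -
  have f: "frontier {u..v} \<subseteq> {u, v}"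
    unfolding frontier_def closure_closed[OF closed_atLeastAtMost] by auto
  have "emeasure (MM w) {u, v} = (\<integral>\<^sup>+x. ennreal (Wd w x) * indicator {u, v} x \<partial>lborel)"
    unfolding MM_def by (rule emeasure_density) auto
  also have "\<dots> = 0"
  proof -
    have "AE x in lborel. ennreal (Wd w x) * indicator {u, v} x = 0"
      using AE_lborel_singleton[of u] AE_lborel_singleton[of v] by eventually_elim auto
    from nn_integral_cong_AE[OF this] show ?thesis by simp
  qed
  finally have "emeasure (MM w) {u, v} = 0" by simp
  moreover have "emeasure (MM w) (frontier {u..v}) \<le> emeasure (MM w) {u, v}"
    by (rule emeasure_mono[OF f]) (simp add: MM_def)
  ultimately show ?thesis by simp
qed

lemma qw_prob_nonneg: "0 \<le> qw_prob \<omega> n x"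
  unfolding qw_prob_def by simp

lemma qw_prob_zero: "x \<notin> {- int n..int n} \<Longrightarrow> qw_prob \<omega> n x = 0"
  unfolding qw_prob_def by auto

lemma Gf_zero_t: "Gf (alpha0 \<omega>) (beta0 \<omega>) n 0 k = 1"
proof -
  have "Gf (alpha0 \<omega>) (beta0 \<omega>) n 0 k = pp (alpha0 \<omega>) (beta0 \<omega>) k + qq (alpha0 \<omega>) (beta0 \<omega>) k"
    unfolding G_expand by (simp add: ortho ortho' pp_def qq_def)
  also have "\<dots> = 1" by (simp add: pp_formula qq_formula flip: of_real_add)
  finally show ?thesis .
qed

lemma total_prob: "(\<Sum>x\<in>{- int n..int n}. qw_prob \<omega> n x) = 1"
proof -
  have "(Gf (alpha0 \<omega>) (beta0 \<omega>) n 0 has_integral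
     (2 * pi * (\<Sum>x\<in>{-int n..int n}. complex_of_real (qw_prob \<omega> n x)))) {0..2*pi}"
    using Gf_has_integral[of "alpha0 \<omega>" "beta0 \<omega>" n 0] by (simp add: qw_prob_hw)
  moreover have "(Gf (alpha0 \<omega>) (beta0 \<omega>) n 0 has_integral (2 * pi)) {0..2*pi}"
    unfolding Gf_zero_t using has_integral_const_real[of "1::complex" 0 "2*pi"] by (simp add: scaleR_conv_of_real)
  ultimately have "2 * pi * (\<Sum>x\<in>{-int n..int n}. complex_of_real (qw_prob \<omega> n x)) = 2 * pi"
    using has_integral_unique by blast
  then have "complex_of_real (\<Sum>x\<in>{-int n..int n}. qw_prob \<omega> n x) = 1" by simp
  then show ?thesis by (simp only: of_real_eq_1_iff)
qed

definition Pn :: "(int \<Rightarrow> real) \<Rightarrow> nat \<Rightarrow> int pmf" where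
  "Pn \<omega> n = embed_pmf (qw_prob \<omega> n)"

lemma pmf_Pn: "pmf (Pn \<omega> n) x = qw_prob \<omega> n x"
  unfolding Pn_def
proof (rule pmf_embed_pmf)
  show "0 \<le> qw_prob \<omega> n x" for x by (rule qw_prob_nonneg)
  have "(\<integral>\<^sup>+x. ennreal (qw_prob \<omega> n x) \<partial>count_space UNIV) = (\<Sum>x\<in>{- int n..int n}. ennreal (qw_prob \<omega> n x))"
    by (rule nn_integral_count_space') (auto simp: qw_prob_zero)
  also have "\<dots> = 1" by (simp add: qw_prob_nonneg total_prob)
  finally show "(\<integral>\<^sup>+x. ennreal (qw_prob \<omega> n x) \<partial>count_space UNIV) = 1" .
qed

lemma set_Pn: "set_pmf (Pn \<omega> n) \<subseteq> {- int n..int n}"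
proof
  fix x assume "x \<in> set_pmf (Pn \<omega> n)"
  then have "qw_prob \<omega> n x \<noteq> 0" by (simp add: set_pmf_iff pmf_Pn)
  then show "x \<in> {- int n..int n}" using qw_prob_zero by blast
qed

definition mu :: "(int \<Rightarrow> real) \<Rightarrow> nat \<Rightarrow> real measure" where
  "mu \<omega> n = distr (measure_pmf (Pn \<omega> n)) borel (\<lambda>x. real_of_int x / real n)"

lemma real_distribution_mu: "real_distribution (mu \<omega> n)"
proof -
  have "prob_space (mu \<omega> n)" unfolding mu_def
    by (rule measure_pmf.prob_space_distr) simp
  then show ?thesis unfolding real_distribution_def real_distribution_axioms_def by (simp add: mu_def)
qed

lemma char_mu: "char (mu \<omega> n) t = (\<Sum>x\<in>{- int n..int n}. complex_of_real (qw_prob \<omega> n x) * iexp (t / real n * of_int x))"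
proof -
  have "char (mu \<omega> n) t = (CLINT x|measure_pmf (Pn \<omega> n). iexp (t * (real_of_int x / real n)))"
    unfolding char_def mu_def by (subst integral_distr) auto
  also have "\<dots> = (\<Sum>x\<in>{- int n..int n}. pmf (Pn \<omega> n) x *\<^sub>R iexp (t * (real_of_int x / real n)))"
    by (rule integral_measure_pmf) (use set_Pn[of \<omega> n] in blast)+
  also have "\<dots> = (\<Sum>x\<in>{- int n..int n}. complex_of_real (qw_prob \<omega> n x) * iexp (t / real n * of_int x))"
    by (rule sum.cong) (simp_all add: pmf_Pn scaleR_conv_of_real)
  finally show ?thesis .
qed

lemma char_mu_conv: "(\<lambda>n. char (mu \<omega> n) t) \<longlonglongrightarrow> char (MM (\<omega> 0)) t"
proof -
  let ?a = "alpha0 \<omega>" and ?b = "beta0 \<omega>"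
  have e: "char (mu \<omega> n) t = (1 / (2 * pi)) *\<^sub>R integral {0..2*pi} (Gf ?a ?b n t)" for n
  proof -
    have "integral {0..2*pi} (Gf ?a ?b n t) = 2 * pi * char (mu \<omega> n) t"
      unfolding char_mu using Gf_has_integral[of ?a ?b n t] by (simp add: qw_prob_hw integral_unique)
    then show ?thesis by (simp add: scaleR_conv_of_real)
  qed
  have "(\<lambda>n. (1 / (2 * pi)) *\<^sub>R integral {0..2*pi} (Gf ?a ?b n t)) \<longlonglongrightarrow> (1 / (2 * pi)) *\<^sub>R integral {0..2*pi} (Lf ?a ?b t)"
    by (intro tendsto_scaleR tendsto_const Gf_conv norm_alpha_beta)
  moreover have "(1 / (2 * pi)) *\<^sub>R integral {0..2*pi} (Lf ?a ?b t) = char (MM (\<omega> 0)) t"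
    unfolding Lf_int char_MM by (simp add: scaleR_conv_of_real)
  ultimately show ?thesis unfolding e by simp
qed

lemma measure_mu: "0 < n \<Longrightarrow> measure (mu \<omega> n) {u..v} = qw_interval_prob \<omega> n u v"
proof -
  assume n: "0 < n"
  let ?B = "(\<lambda>x. real_of_int x / real n) -` {u..v}"
  have "measure (mu \<omega> n) {u..v} = measure (measure_pmf (Pn \<omega> n)) ?B"
    unfolding mu_def by (subst measure_distr) auto
  also have "\<dots> = measure (measure_pmf (Pn \<omega> n)) (?B \<inter> set_pmf (Pn \<omega> n))"
    by (rule measure_Int_set_pmf[symmetric])
  also have "?B \<inter> set_pmf (Pn \<omega> n) = (?B \<inter> {- int n..int n}) \<inter> set_pmf (Pn \<omega> n)"
    using set_Pn by blast
  also have "measure (measure_pmf (Pn \<omega> n)) \<dots> = measure (measure_pmf (Pn \<omega> n)) (?B \<inter> {- int n..int n})"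
    by (rule measure_Int_set_pmf)
  also have "\<dots> = sum (pmf (Pn \<omega> n)) (?B \<inter> {- int n..int n})"
    by (rule measure_measure_pmf_finite) simp
  also have "?B \<inter> {- int n..int n} = {x\<in>{- int n..int n}. u \<le> real_of_int x / real n \<and> real_of_int x / real n \<le> v}"
    by auto
  also have "sum (pmf (Pn \<omega> n)) \<dots> = qw_interval_prob \<omega> n u v"
    unfolding qw_interval_prob_def by (simp add: pmf_Pn)
  finally show ?thesis .
qed

theorem theorem2:
  fixes \<omega> :: "int \<Rightarrow> real" and u v :: real
  assumes "u \<le> v"
  shows "(\<lambda>n. qw_interval_prob \<omega> n u v) \<longlonglongrightarrow>
           integral {u..v} (\<lambda>x. (1 - sin (\<omega> 0) * x) * f_K x)"
proof -
  have wc: "weak_conv_m (mu \<omega>) (MM (\<omega> 0))"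
    by (rule levy_continuity) (auto intro: real_distribution_mu real_distribution_MM char_mu_conv)
  have "(\<lambda>n. measure (mu \<omega> n) {u..v}) \<longlonglongrightarrow> measure (MM (\<omega> 0)) {u..v}"
    by (rule weak_conv_imp_continuity_set_conv[OF real_distribution_mu real_distribution_MM wc])
       (auto simp: MM_frontier)
  then have "(\<lambda>n. measure (mu \<omega> n) {u..v}) \<longlonglongrightarrow> integral {u..v} (\<lambda>x. (1 - sin (\<omega> 0) * x) * f_K x)"
    unfolding measure_MM_Icc Wd_def .
  moreover have "eventually (\<lambda>n. measure (mu \<omega> n) {u..v} = qw_interval_prob \<omega> n u v) sequentially"
    by (rule eventually_sequentiallyI[of 1]) (simp add: measure_mu)
  ultimately show ?thesis by (rule Lim_transform_eventually)
qed

end
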